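(* Let $u,w\in\mathbb{D}$ and $B(z)=\left(\frac{z-w}{1-\overline{w}z}\right)\left(\frac{z-u}{1-\overline{u}z}\right)$, let $c$ be the unique critical point of $B$ in $\mathbb{D}$, and let \[ \lambda=\exp\!\left[i\left(\pi+2\arg(1-\overline{c}w)+2\arg(1-\overline{c}u)+2\arg(1-c\overline{B(c)})\right)\right]\left(\frac{B(c)-c}{1-\overline{c}B(c)}\right). \] Then $B$ is elliptic, parabolic or hyperbolic respectively if and only if $\lambda$ lies in $\mathcal{E}_2$, in the relative boundary of $\mathcal{E}_2$ in $\mathbb{D}$, or in $\mathbb{D}\setminus\overline{\mathcal{E}_2}$, respectively.
   Context: $\mathbb{D}$ denotes the open unit disk. By the Denjoy–Wolff theorem, a finite Blaschke product $B$ of degree at least $2$ has a unique point $z_0\in\overline{\mathbb{D}}$ (its Denjoy–Wolff point) such that $B^n(z)\to z_0$ for every $z\in\mathbb{D}$. $B$ is called elliptic if $z_0\in\mathbb{D}$; hyperbolic if $z_0\in\partial\mathbb{D}$ and $B'(z_0)<1$; parabolic if $z_0\in\partial\mathbb{D}$ and $B'(z_0)=1$. $\mathcal{E}_2$ is the set of $w\in\mathbb{D}$ for which $\left(\frac{z-w}{1-\overline{w}z}\right)^2$ is elliptic. The quantities $\exp(2i\arg(\cdot))$ do not depend on the choice of branch of $\arg$. *)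

theory Defs
  imports "HOL-Analysis.Analysis"
begin

definition blaschke_factor :: "complex \<Rightarrow> complex \<Rightarrow> complex" where
  "blaschke_factor w z = (z - w) / (1 - cnj w * z)"

definition DW_point :: "(complex \<Rightarrow> complex) \<Rightarrow> complex \<Rightarrow> bool" where
  "DW_point B z0 \<longleftrightarrow> z0 \<in> cball 0 1 \<and>
     (\<forall>z\<in>ball 0 1. (\<lambda>n. (B ^^ n) z) \<longlonglongrightarrow> z0)"

definition elliptic :: "(complex \<Rightarrow> complex) \<Rightarrow> bool" where
  "elliptic B \<longleftrightarrow> (\<exists>z0. DW_point B z0 \<and> z0 \<in> ball 0 1)"

definition hyperbolic :: "(complex \<Rightarrow> complex) \<Rightarrow> bool" where
  "hyperbolic B \<longleftrightarrow> (\<exists>z0. DW_point B z0 \<and> norm z0 = 1 \<and>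
      deriv B z0 \<in> \<real> \<and> Re (deriv B z0) < 1)"

definition parabolic :: "(complex \<Rightarrow> complex) \<Rightarrow> bool" where
  "parabolic B \<longleftrightarrow> (\<exists>z0. DW_point B z0 \<and> norm z0 = 1 \<and> deriv B z0 = 1)"

definition E2 :: "complex set" where
  "E2 = {w \<in> ball 0 1. elliptic (\<lambda>z. (blaschke_factor w z)^2)}"

end

theory Submission
  imports Defs "HOL-Complex_Analysis.Complex_Analysis"
begin

lemma norm_identity:
  "(norm (1 - cnj a * z))^2 - (norm (z - a))^2 = (1 - (norm a)^2) * (1 - (norm z)^2)"
  by (simp only: cmod_power2) (simp add: power2_eq_square algebra_simps)

lemma bf_denom_nz: "norm a < 1 \<Longrightarrow> norm z \<le> 1 \<Longrightarrow> 1 - cnj a * z \<noteq> 0"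
proof -
  assume a: "norm a < 1" and z: "norm z \<le> 1"
  have "norm a * norm z \<le> norm a * 1" using z by (intro mult_left_mono) auto
  then have "norm (cnj a * z) < 1" using a by (simp add: norm_mult)
  then show ?thesis by auto
qed

lemma bf_norm_sq:
  assumes "norm a < 1" "norm z \<le> 1"
  shows "1 - (norm (blaschke_factor a z))^2 = (1 - (norm a)^2) * (1 - (norm z)^2) / (norm (1 - cnj a * z))^2"
proof -
  have nz: "norm (1 - cnj a * z) \<noteq> 0" using bf_denom_nz[OF assms] by simp
  have "(norm (blaschke_factor a z))^2 = (norm (z - a))^2 / (norm (1 - cnj a * z))^2"
    by (simp add: blaschke_factor_def norm_divide power_divide)
  also have "\<dots> = ((norm (1 - cnj a * z))^2 - (1 - (norm a)^2) * (1 - (norm z)^2)) / (norm (1 - cnj a * z))^2"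
    using norm_identity[of a z] by (simp add: algebra_simps)
  finally show ?thesis using nz by (simp add: field_simps)
qed

lemma bf_lt1: "norm a < 1 \<Longrightarrow> norm z < 1 \<Longrightarrow> norm (blaschke_factor a z) < 1"
proof -
  assume a: "norm a < 1" and z: "norm z < 1"
  have "1 - (norm (blaschke_factor a z))^2 > 0"
    using bf_norm_sq[OF a] z a bf_denom_nz[OF a, of z]
    by (auto intro!: divide_pos_pos mult_pos_pos simp: power_less_one_iff abs_square_less_1)
  then show ?thesis by (simp add: abs_square_less_1)
qed

lemma bf_le1: "norm a < 1 \<Longrightarrow> norm z \<le> 1 \<Longrightarrow> norm (blaschke_factor a z) \<le> 1"
proof -
  assume a: "norm a < 1" and z: "norm z \<le> 1"
  have "1 - (norm (blaschke_factor a z))^2 \<ge> 0"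
    using bf_norm_sq[OF a z] z a
    by (auto intro!: divide_nonneg_nonneg mult_nonneg_nonneg simp: power_le_one abs_square_le_1)
  then show ?thesis by (simp add: abs_square_le_1)
qed

lemma bf_eq1: "norm a < 1 \<Longrightarrow> norm z = 1 \<Longrightarrow> norm (blaschke_factor a z) = 1"
proof -
  assume a: "norm a < 1" and z: "norm z = 1"
  have "1 - (norm (blaschke_factor a z))^2 = 0"
    using bf_norm_sq[OF a] z a by simp
  then have "(norm (blaschke_factor a z))^2 = 1" by simp
  then show ?thesis using norm_ge_zero[of "blaschke_factor a z"] by (simp add: power2_eq_1_iff)
qed

lemma bf_inv: "norm a < 1 \<Longrightarrow> 1 - cnj a * z \<noteq> 0 \<Longrightarrow> blaschke_factor (-a) (blaschke_factor a z) = z"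
proof -
  assume a: "norm a < 1" and d: "1 - cnj a * z \<noteq> 0"
  have "norm a * norm a \<le> norm a * 1" using a by (intro mult_left_mono) auto
  then have "norm (cnj a * a) < 1" using a by (simp add: norm_mult)
  then have "cnj a * a \<noteq> 1" by auto
  then have "1 - cnj a * a \<noteq> 0" by simp
  have e1: "(z - a)/(1 - cnj a*z) + a = z*(1 - cnj a*a)/(1 - cnj a*z)"
    using d by (simp add: field_simps)
  have e2: "1 - cnj (-a)*((z-a)/(1-cnj a*z)) = (1 - cnj a*a)/(1-cnj a*z)"
    using d by (simp add: field_simps)
  have "blaschke_factor (-a) (blaschke_factor a z) = ((z - a)/(1 - cnj a*z) + a) / (1 - cnj (-a)*((z-a)/(1-cnj a*z)))"
    by (simp add: blaschke_factor_def)
  also have "\<dots> = z" unfolding e1 e2 using d \<open>1 - cnj a * a \<noteq> 0\<close> by simp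
  finally show ?thesis .
qed

lemma DW_unique: "DW_point f a \<Longrightarrow> DW_point f b \<Longrightarrow> a = b"
proof -
  assume a: "DW_point f a" and b: "DW_point f b"
  have "(\<lambda>n. (f ^^ n) 0) \<longlonglongrightarrow> a" using a unfolding DW_point_def by simp
  moreover have "(\<lambda>n. (f ^^ n) 0) \<longlonglongrightarrow> b" using b unfolding DW_point_def by simp
  ultimately show "a = b" by (rule LIMSEQ_unique)
qed

lemma ell_not_par: "elliptic f \<Longrightarrow> \<not> parabolic f"
proof
  assume "elliptic f" "parabolic f"
  then obtain a b where "DW_point f a" "a \<in> ball 0 1" "DW_point f b" "norm b = 1"
    unfolding elliptic_def parabolic_def by blast
  moreover from this have "a = b" by (intro DW_unique)
  ultimately show False by simp
qed

lemma ell_not_hyp: "elliptic f \<Longrightarrow> \<not> hyperbolic f"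
proof
  assume "elliptic f" "hyperbolic f"
  then obtain a b where "DW_point f a" "a \<in> ball 0 1" "DW_point f b" "norm b = 1"
    unfolding elliptic_def hyperbolic_def by blast
  moreover from this have "a = b" by (intro DW_unique)
  ultimately show False by simp
qed

lemma par_not_hyp: "parabolic f \<Longrightarrow> \<not> hyperbolic f"
proof
  assume "parabolic f" "hyperbolic f"
  then obtain a b where "DW_point f a" "deriv f a = 1" "DW_point f b" "Re (deriv f b) < 1"
    unfolding hyperbolic_def parabolic_def by blast
  moreover from this have "a = b" by (intro DW_unique)
  ultimately show False by simp
qed

lemma DW_fixed:
  assumes "DW_point f z0" "isCont f z0"
  shows "f z0 = z0"
proof -
  have L: "(\<lambda>n. (f ^^ n) 0) \<longlonglongrightarrow> z0" using assms(1) unfolding DW_point_def by auto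
  have L1: "(\<lambda>n. f ((f ^^ n) 0)) \<longlonglongrightarrow> f z0" by (rule isCont_tendsto_compose[OF assms(2) L])
  have L2: "(\<lambda>n. (f ^^ Suc n) 0) \<longlonglongrightarrow> z0" using L by (rule LIMSEQ_Suc)
  have e: "(\<lambda>n. (f ^^ Suc n) 0) = (\<lambda>n. f ((f ^^ n) 0))" by (simp only: funpow.simps comp_def)
  show ?thesis using L1 L2 unfolding e by (rule LIMSEQ_unique)
qed

lemma transfer:
  fixes H G A Ai :: "complex \<Rightarrow> complex"
  assumes Hball: "\<And>z. z \<in> ball 0 1 \<Longrightarrow> H z \<in> ball 0 1"
    and Aball: "\<And>z. z \<in> ball 0 1 \<Longrightarrow> A z \<in> ball 0 1"
    and AiA: "\<And>y. y \<in> ball 0 1 \<Longrightarrow> A (Ai y) = y"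
    and AiA2: "\<And>y. y \<in> ball 0 1 \<Longrightarrow> Ai (A y) = y"
    and Gconj: "\<And>z. z \<in> ball 0 1 \<Longrightarrow> G z = Ai (H (A z))"
    and Ai_ball: "\<And>z. z \<in> ball 0 1 \<Longrightarrow> Ai z \<in> ball 0 1"
    and Ai_sph: "\<And>z. norm z = 1 \<Longrightarrow> norm (Ai z) = 1"
    and Ai_cont: "\<And>z. z \<in> cball 0 1 \<Longrightarrow> isCont Ai z"
    and H_cont: "\<And>z. norm z = 1 \<Longrightarrow> isCont H z"
    and bd1: "\<And>z. norm z = 1 \<Longrightarrow> eventually (\<lambda>y. G y = Ai (H (A y))) (nhds (Ai z))"
    and bd2: "\<And>z. norm z = 1 \<Longrightarrow> eventually (\<lambda>y. Ai (A y) = y) (nhds (Ai z))"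
    and bd3: "\<And>z. norm z = 1 \<Longrightarrow> A (Ai z) = z"
    and bdA: "\<And>z. norm z = 1 \<Longrightarrow> A field_differentiable at (Ai z)"
    and bdAi: "\<And>z. norm z = 1 \<Longrightarrow> Ai field_differentiable at z"
    and bdH: "\<And>z. norm z = 1 \<Longrightarrow> H field_differentiable at z"
  shows "(elliptic H \<longrightarrow> elliptic G) \<and> (parabolic H \<longrightarrow> parabolic G) \<and> (hyperbolic H \<longrightarrow> hyperbolic G)"
proof -
  have iter: "(G ^^ n) z = Ai ((H ^^ n) (A z)) \<and> (H ^^ n) (A z) \<in> ball 0 1" if z: "z \<in> ball 0 1" for z n
  proof (induction n)
    case 0 then show ?case using z Aball AiA2 by simp
  next
    case (Suc n)
    then have y: "(H ^^ n) (A z) \<in> ball 0 1" by blast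
    have "(G ^^ Suc n) z = G (Ai ((H ^^ n) (A z)))" using Suc by simp
    also have "\<dots> = Ai (H (A (Ai ((H ^^ n) (A z)))))" using Gconj Ai_ball y by blast
    also have "\<dots> = Ai ((H ^^ Suc n) (A z))" using AiA y by simp
    finally show ?case using Hball y by simp
  qed
  have DW: "DW_point G (Ai z0)" if d: "DW_point H z0" for z0
  proof -
    have z0: "z0 \<in> cball 0 1" using d unfolding DW_point_def by auto
    have "Ai z0 \<in> cball 0 1"
    proof (cases "norm z0 = 1")
      case True then show ?thesis using Ai_sph by simp
    next
      case False
      then have "z0 \<in> ball 0 1" using z0 by simp
      then have "norm (Ai z0) < 1" using Ai_ball by simp
      then show ?thesis by simp
    qed
    moreover have "(\<lambda>n. (G ^^ n) z) \<longlonglongrightarrow> Ai z0" if z: "z \<in> ball 0 1" for z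
    proof -
      have "(\<lambda>n. (H ^^ n) (A z)) \<longlonglongrightarrow> z0" using d Aball z unfolding DW_point_def by auto
      then have "(\<lambda>n. Ai ((H ^^ n) (A z))) \<longlonglongrightarrow> Ai z0" by (rule isCont_tendsto_compose[OF Ai_cont[OF z0]])
      then show ?thesis using iter[OF z] by simp
    qed
    ultimately show ?thesis unfolding DW_point_def by auto
  qed
  have DER: "deriv G (Ai z0) = deriv H z0" if d: "DW_point H z0" and n: "norm z0 = 1" for z0
  proof -
    have fix0: "H z0 = z0" using DW_fixed[OF d H_cont[OF n]] .
    obtain dA where dA: "(A has_field_derivative dA) (at (Ai z0))" using bdA[OF n] field_differentiable_def by blast
    obtain dAi where dAi: "(Ai has_field_derivative dAi) (at z0)" using bdAi[OF n] field_differentiable_def by blast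
    obtain dH where dH: "(H has_field_derivative dH) (at z0)" using bdH[OF n] field_differentiable_def by blast
    have dAi': "(Ai has_field_derivative dAi) (at (A (Ai z0)))" using dAi bd3[OF n] by simp
    have dH': "(H has_field_derivative dH) (at (A (Ai z0)))" using dH bd3[OF n] by simp
    have dAi'': "(Ai has_field_derivative dAi) (at (H (A (Ai z0))))" using dAi bd3[OF n] fix0 by simp
    have c1: "((\<lambda>y. Ai (A y)) has_field_derivative dAi * dA) (at (Ai z0))"
      using DERIV_chain2[OF dAi' dA] .
    have c2: "((\<lambda>y. y) has_field_derivative dAi * dA) (at (Ai z0))"
      using DERIV_cong_ev[OF refl bd2[OF n] refl] c1 by blast
    have one: "dAi * dA = 1" using DERIV_unique[OF c2 DERIV_ident] .
    have hA: "((\<lambda>y. H (A y)) has_field_derivative dH * dA) (at (Ai z0))"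
      using DERIV_chain2[OF dH' dA] .
    have c3: "((\<lambda>y. Ai (H (A y))) has_field_derivative dAi * (dH * dA)) (at (Ai z0))"
      using DERIV_chain2[OF dAi'' hA] .
    have c4: "(G has_field_derivative dAi * (dH * dA)) (at (Ai z0))"
      using DERIV_cong_ev[OF refl bd1[OF n] refl] c3 by blast
    have "deriv G (Ai z0) = dH" using DERIV_imp_deriv[OF c4] one by (simp add: algebra_simps)
    moreover have "deriv H z0 = dH" using DERIV_imp_deriv[OF dH] .
    ultimately show ?thesis by simp
  qed
  show ?thesis
  proof (intro conjI impI)
    assume "elliptic H"
    then obtain z0 where "DW_point H z0" "z0 \<in> ball 0 1" unfolding elliptic_def by auto
    then show "elliptic G" unfolding elliptic_def using DW Ai_ball by auto
  next
    assume "parabolic H"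
    then obtain z0 where "DW_point H z0" "norm z0 = 1" "deriv H z0 = 1" unfolding parabolic_def by auto
    then show "parabolic G" unfolding parabolic_def using DW DER Ai_sph by (intro exI[of _ "Ai z0"]) auto
  next
    assume "hyperbolic H"
    then obtain z0 where "DW_point H z0" "norm z0 = 1" "deriv H z0 \<in> \<real>" "Re (deriv H z0) < 1" unfolding hyperbolic_def by auto
    then show "hyperbolic G" unfolding hyperbolic_def using DW DER Ai_sph by (intro exI[of _ "Ai z0"]) auto
  qed
qed

lemma count_bound:
  fixes a :: "nat \<Rightarrow> real"
  assumes mono: "\<And>n. a (Suc n) \<le> a n" and contr: "\<And>n. P n \<Longrightarrow> a (Suc n) \<le> c * a n"
    and c: "0 \<le> c" "c \<le> 1" and pos: "\<And>n. 0 \<le> a n"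
  shows "a n \<le> c ^ card {j. j < n \<and> P j} * a 0"
proof (induction n)
  case 0 then show ?case by simp
next
  case (Suc n)
  show ?case
  proof (cases "P n")
    case True
    have "{j. j < Suc n \<and> P j} = insert n {j. j < n \<and> P j}" using True by auto
    then have "card {j. j < Suc n \<and> P j} = Suc (card {j. j < n \<and> P j})" by simp
    then have "c ^ card {j. j < Suc n \<and> P j} * a 0 = c * (c ^ card {j. j < n \<and> P j} * a 0)" by simp
    moreover have "a (Suc n) \<le> c * a n" using contr True by blast
    moreover have "c * a n \<le> c * (c ^ card {j. j < n \<and> P j} * a 0)" using Suc c by (intro mult_left_mono) auto
    ultimately show ?thesis by linarith
  next
    case False
    have "{j. j < Suc n \<and> P j} = {j. j < n \<and> P j}" using False less_Suc_eq by auto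
    then show ?thesis using Suc mono[of n] by simp
  qed
qed

lemma count_decay:
  fixes a :: "nat \<Rightarrow> real"
  assumes mono: "\<And>n. a (Suc n) \<le> a n" and contr: "\<And>n. P n \<Longrightarrow> a (Suc n) \<le> c * a n"
    and c: "0 \<le> c" "c < 1" and pos: "\<And>n. 0 \<le> a n" and e: "e > 0" and inf: "infinite {n. P n}"
  shows "\<exists>N. \<forall>n\<ge>N. a n < e"
proof -
  obtain K where K: "c ^ K < e / (a 0 + 1)"
    using real_arch_pow_inv[of "e / (a 0 + 1)" c] e c pos[of 0] by auto
  obtain B where B: "finite B" "card B = K" "B \<subseteq> {n. P n}"
    using infinite_arbitrarily_large[OF inf] by blast
  define N where "N = Suc (Max (insert 0 B))"
  have "a n < e" if n: "n \<ge> N" for n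
  proof -
    have "B \<subseteq> {j. j < n \<and> P j}"
    proof
      fix j assume j: "j \<in> B"
      then have "j \<le> Max (insert 0 B)" using B(1) by simp
      then show "j \<in> {j. j < n \<and> P j}" using n j B(3) unfolding N_def by auto
    qed
    then have "K \<le> card {j. j < n \<and> P j}" using B by (metis card_mono finite_Collect_conjI finite_Collect_less_nat)
    then have "c ^ card {j. j < n \<and> P j} \<le> c ^ K" using c by (intro power_decreasing) auto
    then have "a n \<le> c ^ K * a 0"
      using count_bound[of a P c n, OF mono contr c(1) _ pos] c pos[of 0]
      by (meson less_imp_le mult_right_mono order_trans)
    also have "\<dots> \<le> e / (a 0 + 1) * a 0" using K pos[of 0] by (intro mult_right_mono) auto
    also have "\<dots> < e" using e pos[of 0] by (simp add: field_simps)
    finally show ?thesis .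
  qed
  then show ?thesis by blast
qed

lemma k_bounds:
  fixes r \<rho> :: real
  assumes "0 \<le> r"
  shows "(1 + r)^2 / (2 * (1 + r^2)) = 1 - (1 - r)^2 / (2 * (1 + r^2))"
    and "(1 + r)^2 / (2 * (1 + r^2)) \<le> 1"
    and "0 \<le> (1 + r)^2 / (2 * (1 + r^2))"
    and "r \<le> \<rho> \<Longrightarrow> \<rho> \<le> 1 \<Longrightarrow> (1 + r)^2 / (2 * (1 + r^2)) \<le> 1 - (1 - \<rho>)^2 / 4"
proof -
  have p: "2 * (1 + r^2) > 0" by (simp add: add_pos_nonneg)
  show eq: "(1 + r)^2 / (2 * (1 + r^2)) = 1 - (1 - r)^2 / (2 * (1 + r^2))"
    using p by (simp add: field_simps power2_eq_square)
  show "(1 + r)^2 / (2 * (1 + r^2)) \<le> 1" unfolding eq using p by simp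
  show "0 \<le> (1 + r)^2 / (2 * (1 + r^2))" using p by simp
  assume r: "r \<le> \<rho>" "\<rho> \<le> 1"
  have "(1 - \<rho>)^2 \<le> (1 - r)^2" using r assms by (intro power_mono) auto
  moreover have "r^2 \<le> 1" using r assms by (intro power_le_one) auto
  then have "2 * (1 + r^2) \<le> 4" by simp
  ultimately have "(1 - \<rho>)^2 / 4 \<le> (1 - r)^2 / (2 * (1 + r^2))"
    using p by (intro frac_le) auto
  then show "(1 + r)^2 / (2 * (1 + r^2)) \<le> 1 - (1 - \<rho>)^2 / 4" unfolding eq by simp
qed

lemma conv_boundary:
  fixes f :: "complex \<Rightarrow> complex" and \<zeta> z :: complex
  assumes zeta: "norm \<zeta> = 1" and fb: "\<And>z. norm z < 1 \<Longrightarrow> norm (f z) < 1"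
    and hh: "\<And>z. norm z < 1 \<Longrightarrow> (norm (\<zeta> - f z))^2 / (1 - (norm (f z))^2)
          \<le> (norm (\<zeta> - z))^2 / (1 - (norm z)^2) * ((1 + norm z)^2 / (2 * (1 + (norm z)^2)))"
    and z: "norm z < 1"
  shows "(\<lambda>n. (f ^^ n) z) \<longlonglongrightarrow> \<zeta>"
proof -
  define x where "x n = (f ^^ n) z" for n
  have xb: "norm (x n) < 1" for n unfolding x_def by (induction n) (auto simp: z fb)
  define a where "a n = (norm (\<zeta> - x n))^2 / (1 - (norm (x n))^2)" for n
  have apos: "0 \<le> a n" for n unfolding a_def using xb[of n]
    by (intro divide_nonneg_nonneg) (auto simp: abs_square_le_1 less_imp_le)
  define k where "k r = (1 + r)^2 / (2 * (1 + r^2))" for r :: real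
  have step: "a (Suc n) \<le> a n * k (norm (x n))" for n
    using hh[OF xb[of n]] unfolding a_def k_def x_def by simp
  have mono: "a (Suc n) \<le> a n" for n
  proof -
    have "a n * k (norm (x n)) \<le> a n * 1" using apos[of n] k_bounds(2)[of "norm (x n)"] unfolding k_def
      by (intro mult_left_mono) auto
    then show ?thesis using step[of n] by simp
  qed
  have anR: "a n \<le> a 0" for n
  proof (induction n)
    case (Suc n) then show ?case using mono[of n] by linarith
  qed simp
  have sq: "(norm (\<zeta> - x n))^2 = a n * (1 - (norm (x n))^2)" for n
  proof -
    have "1 - (norm (x n))^2 > 0" using xb[of n] by (simp add: abs_square_less_1)
    then show ?thesis unfolding a_def by simp
  qed
  show ?thesis unfolding lim_sequentially
  proof (intro allI impI)
    fix \<epsilon> :: real assume ep: "\<epsilon> > 0"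
    define e where "e = \<epsilon>^2"
    have e: "e > 0" using ep unfolding e_def by simp
    define R where "R = a 0"
    have R: "R \<ge> 0" unfolding R_def using apos by simp
    define \<delta> where "\<delta> = min (1/2) (e / (2 * (R + 1)))"
    have d: "\<delta> > 0" "\<delta> \<le> 1/2"
      unfolding \<delta>_def using e R by (simp_all add: min_def)
    have Rd: "R * \<delta> < e"
    proof -
      have "R * \<delta> \<le> R * (e / (2 * (R + 1)))" using R unfolding \<delta>_def by (intro mult_left_mono) auto
      also have "\<dots> = e * (R / (2 * (R + 1)))" by simp
      also have "\<dots> < e * 1"
      proof (rule mult_strict_left_mono)
        show "R / (2 * (R + 1)) < 1" using R by (simp add: field_simps)
      qed (use e in auto)
      also have "\<dots> = e" by simp
      finally show ?thesis .
    qed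
    define \<rho> where "\<rho> = sqrt (1 - \<delta>)"
    have rho: "0 \<le> \<rho>" "\<rho> < 1" "\<rho>^2 = 1 - \<delta>" using d unfolding \<rho>_def by auto
    define c where "c = 1 - (1 - \<rho>)^2 / 4"
    have c: "0 \<le> c" "c < 1"
    proof -
      have "(1 - \<rho>)^2 \<le> 1" using rho by (intro power_le_one) auto
      then show "0 \<le> c" unfolding c_def by simp
      have "(1 - \<rho>)^2 > 0" using rho by simp
      then show "c < 1" unfolding c_def by simp
    qed
    define P where "P n = (norm (x n) \<le> \<rho>)" for n
    have contr: "a (Suc n) \<le> c * a n" if "P n" for n
    proof -
      have "k (norm (x n)) \<le> c" using k_bounds(4)[of "norm (x n)" \<rho>] that rho unfolding P_def k_def c_def by simp
      then have "a n * k (norm (x n)) \<le> a n * c" using apos[of n] by (intro mult_left_mono) auto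
      then show ?thesis using step[of n] by (simp add: mult.commute)
    qed
    have ev: "\<exists>N. \<forall>n\<ge>N. (norm (\<zeta> - x n))^2 < e"
    proof (cases "finite {n. P n}")
      case True
      then obtain N where N0: "\<forall>n\<in>{n. P n}. n < N" unfolding finite_nat_set_iff_bounded by blast
      have N: "n < N" if "P n" for n using N0 that by simp
      have "(norm (\<zeta> - x n))^2 < e" if n: "n \<ge> N" for n
      proof -
        have "\<not> P n"
        proof
          assume "P n" then have "n < N" by (rule N)
          with n show False by simp
        qed
        then have "norm (x n) > \<rho>" unfolding P_def by simp
        then have "(norm (x n))^2 > \<rho>^2" using rho by (intro power_strict_mono) auto
        then have "1 - (norm (x n))^2 < \<delta>" using rho by simp
        then have "a n * (1 - (norm (x n))^2) \<le> R * \<delta>"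
          using anR[of n] apos[of n] xb[of n] unfolding R_def
          by (intro mult_mono) (auto simp: abs_square_le_1 less_imp_le)
        then show ?thesis using sq[of n] Rd by simp
      qed
      then show ?thesis by blast
    next
      case False
      obtain N where N: "\<And>n. n \<ge> N \<Longrightarrow> a n < e"
        using count_decay[of a P c e, OF mono contr c apos e False] by blast
      have "(norm (\<zeta> - x n))^2 < e" if n: "n \<ge> N" for n
      proof -
        have "a n * (1 - (norm (x n))^2) \<le> a n * 1" using apos[of n] by (intro mult_left_mono) auto
        then show ?thesis using sq[of n] N[OF n] by simp
      qed
      then show ?thesis by blast
    qed
    then obtain N where N: "\<And>n. n \<ge> N \<Longrightarrow> (norm (\<zeta> - x n))^2 < \<epsilon>^2" unfolding e_def by blast
    show "\<exists>no. \<forall>n\<ge>no. dist ((f ^^ n) z) \<zeta> < \<epsilon>"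
    proof (intro exI allI impI)
      fix n assume "n \<ge> N"
      then have "(norm (\<zeta> - x n))^2 < \<epsilon>^2" by (rule N)
      then have "norm (\<zeta> - x n) < \<epsilon>" using ep by (simp add: power_less_imp_less_base)
      then show "dist ((f ^^ n) z) \<zeta> < \<epsilon>" unfolding x_def by (simp add: dist_norm norm_minus_commute)
    qed
  qed
qed


lemma conv_interior:
  fixes g :: "complex \<Rightarrow> complex" and y :: complex
  assumes gb: "\<And>y. norm y < 1 \<Longrightarrow> norm (g y) < 1" and gc: "continuous_on (ball 0 1) g"
    and g0: "g 0 = 0" and gs: "\<And>y. norm y < 1 \<Longrightarrow> y \<noteq> 0 \<Longrightarrow> norm (g y) < norm y"
    and y: "norm y < 1"
  shows "(\<lambda>n. (g ^^ n) y) \<longlonglongrightarrow> 0"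
proof -
  define x where "x n = (g ^^ n) y" for n
  have xb: "norm (x n) < 1" for n unfolding x_def by (induction n) (auto simp: y gb)
  define a where "a n = norm (x n)" for n
  have xs: "x (Suc n) = g (x n)" for n unfolding x_def by simp
  have mono: "a (Suc n) \<le> a n" for n
  proof (cases "x n = 0")
    case True then show ?thesis unfolding a_def using xs g0 by simp
  next
    case False then show ?thesis unfolding a_def using xs gs[OF xb[of n]] by (simp add: less_imp_le)
  qed
  have apos: "0 \<le> a n" for n unfolding a_def by simp
  have anR: "a n \<le> a 0" for n
  proof (induction n)
    case (Suc n) then show ?case using mono[of n] by linarith
  qed simp
  show ?thesis unfolding lim_sequentially
  proof (intro allI impI)
    fix \<epsilon> :: real assume ep: "\<epsilon> > 0"
    have ev: "\<exists>N. \<forall>n\<ge>N. a n < \<epsilon>"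
    proof (cases "a 0 < \<epsilon>")
      case True then show ?thesis using anR by (meson le_less_trans)
    next
      case False
      define C where "C = cball (0::complex) (norm y) - ball 0 \<epsilon>"
      have Cc: "compact C" unfolding C_def by (intro compact_diff) auto
      have yC: "y \<in> C" using False unfolding C_def a_def x_def by simp
      have Cnz: "w \<noteq> 0" if "w \<in> C" for w using that ep unfolding C_def by auto
      have Cb: "w \<in> ball 0 1" if "w \<in> C" for w using that y unfolding C_def by auto
      have cont: "continuous_on C (\<lambda>w. norm (g w) / norm w)"
      proof (intro continuous_intros)
        show "continuous_on C g" using gc Cb by (meson continuous_on_subset subsetI)
      qed (use Cnz in auto)
      obtain w0 where w0: "w0 \<in> C" "\<And>w. w \<in> C \<Longrightarrow> norm (g w) / norm w \<le> norm (g w0) / norm w0"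
        using continuous_attains_sup[OF Cc _ cont] yC by blast
      define c where "c = norm (g w0) / norm w0"
      have c: "0 \<le> c" "c < 1"
      proof -
        show "0 \<le> c" unfolding c_def by simp
        have "norm (g w0) < norm w0" using gs Cb[OF w0(1)] Cnz[OF w0(1)] by simp
        then show "c < 1" unfolding c_def using Cnz[OF w0(1)] by simp
      qed
      define P where "P n = (a n \<ge> \<epsilon>)" for n
      have contr: "a (Suc n) \<le> c * a n" if "P n" for n
      proof -
        have xC: "x n \<in> C" using that anR[of n] unfolding P_def C_def a_def x_def by simp
        have "norm (g (x n)) / norm (x n) \<le> c" using w0(2)[OF xC] unfolding c_def .
        then have "norm (g (x n)) \<le> c * norm (x n)" using Cnz[OF xC] by (simp add: field_simps)
        then show ?thesis unfolding a_def using xs by simp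
      qed
      show ?thesis
      proof (cases "finite {n. P n}")
        case True
        then obtain N where N0: "\<forall>n\<in>{n. P n}. n < N" unfolding finite_nat_set_iff_bounded by blast
        have "a n < \<epsilon>" if n: "n \<ge> N" for n
        proof (rule ccontr)
          assume "\<not> a n < \<epsilon>" then have "P n" unfolding P_def by simp
          then have "n < N" using N0 by simp
          with n show False by simp
        qed
        then show ?thesis by blast
      next
        case False
        show ?thesis using count_decay[of a P c \<epsilon>, OF mono contr c apos ep False] by blast
      qed
    qed
    then obtain N where N: "\<And>n. n \<ge> N \<Longrightarrow> a n < \<epsilon>" by blast
    show "\<exists>no. \<forall>n\<ge>no. dist ((g ^^ n) y) 0 < \<epsilon>"
      using N unfolding a_def x_def by (auto simp: dist_norm)
  qed
qed

definition Hm :: "complex \<Rightarrow> complex \<Rightarrow> complex" where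
  "Hm \<mu> z = blaschke_factor \<mu> (z^2)"

lemma Hm_ball: "norm \<mu> < 1 \<Longrightarrow> norm z < 1 \<Longrightarrow> norm (Hm \<mu> z) < 1"
  unfolding Hm_def by (rule bf_lt1) (auto simp: norm_power power_less_one_iff abs_square_less_1)

lemma Hm_sph: "norm \<mu> < 1 \<Longrightarrow> norm z = 1 \<Longrightarrow> norm (Hm \<mu> z) = 1"
  unfolding Hm_def by (rule bf_eq1) (auto simp: norm_power)

lemma Hm_deriv:
  assumes nz: "1 - cnj \<mu> * z^2 \<noteq> 0"
  shows "(Hm \<mu> has_field_derivative (2*z*(1 - cnj \<mu> * \<mu>)) / (1 - cnj \<mu> * z^2)^2) (at z)"
proof -
  have d1: "((\<lambda>z. z^2 - \<mu>) has_field_derivative 2*z) (at z)"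
    by (auto intro!: derivative_eq_intros)
  have d2: "((\<lambda>z. 1 - cnj \<mu> * z^2) has_field_derivative -(cnj \<mu>*(2*z))) (at z)"
    by (auto intro!: derivative_eq_intros)
  have "((\<lambda>z. (z^2 - \<mu>) / (1 - cnj \<mu> * z^2)) has_field_derivative
     ((2*z) * (1 - cnj \<mu> * z^2) - (z^2 - \<mu>) * (-(cnj \<mu>*(2*z)))) / ((1 - cnj \<mu> * z^2) * (1 - cnj \<mu> * z^2))) (at z)"
    by (rule DERIV_divide[OF d1 d2 nz])
  moreover have "((2*z) * (1 - cnj \<mu> * z^2) - (z^2 - \<mu>) * (-(cnj \<mu>*(2*z)))) / ((1 - cnj \<mu> * z^2) * (1 - cnj \<mu> * z^2))
      = (2*z*(1 - cnj \<mu> * \<mu>)) / (1 - cnj \<mu> * z^2)^2"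
    by (simp add: power2_eq_square algebra_simps)
  ultimately show ?thesis unfolding Hm_def blaschke_factor_def by simp
qed

lemma norm_1p_sq: "(norm (1 + v))^2 = 1 + 2 * Re v + (norm v)^2"
  by (simp only: cmod_power2) (simp add: power2_eq_square algebra_simps)

lemma bd_case:
  fixes v :: complex
  assumes v: "norm v < 1" and t: "4 * Re v + 1 + 3 * (norm v)^2 \<le> 0"
  defines "\<zeta> \<equiv> (1 + v) / (1 + cnj v)"
  defines "\<mu> \<equiv> \<zeta> * v"
  shows "norm \<mu> < 1" "norm \<zeta> = 1" "DW_point (Hm \<mu>) \<zeta>"
    "deriv (Hm \<mu>) \<zeta> = of_real (2 * (norm (1 + v))^2 / (1 - (norm v)^2))"
proof -
  have nz1: "1 + v \<noteq> 0"
  proof assume "1 + v = 0" then have "v = -1" by (simp add: add_eq_0_iff) with v show False by simp qed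
  have nz2: "1 + cnj v \<noteq> 0"
  proof assume "1 + cnj v = 0" then have "cnj v = -1" by (simp add: add_eq_0_iff)
    then have "norm v = 1" by (metis complex_mod_cnj norm_minus_cancel norm_one) with v show False by simp qed
  have n12: "norm (1 + cnj v) = norm (1 + v)"
    by (metis complex_cnj_add complex_cnj_one complex_mod_cnj)
  show zeta: "norm \<zeta> = 1" unfolding \<zeta>_def using n12 nz1 by (simp add: norm_divide)
  show mu: "norm \<mu> < 1" unfolding \<mu>_def using zeta v by (simp add: norm_mult)
  have nmu: "norm \<mu> = norm v" unfolding \<mu>_def using zeta by (simp add: norm_mult)
  have cz: "cnj \<zeta> = (1 + cnj v) / (1 + v)" unfolding \<zeta>_def by simp
  have cmu: "cnj \<mu> = (1 + cnj v) / (1 + v) * cnj v" unfolding \<mu>_def using cz by simp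
  have r1: "\<zeta> * cnj \<zeta> = 1" using zeta complex_norm_square[of \<zeta>] by simp
  have r2: "\<zeta> * (1 + cnj v) = 1 + v" unfolding \<zeta>_def using nz2 by simp
  have cmu: "cnj \<mu> = cnj \<zeta> * cnj v" unfolding \<mu>_def by simp
  have key: "\<zeta> - Hm \<mu> z = (1 + cnj v) * (\<zeta> - z) * (\<zeta> + z) / (1 - cnj \<mu> * z^2)"
    if D: "1 - cnj \<mu> * z^2 \<noteq> 0" for z
  proof -
    have poly: "\<zeta> * (1 - cnj \<zeta> * cnj v * z^2) - (z^2 - \<zeta> * v) = (1 + cnj v) * (\<zeta> - z) * (\<zeta> + z)"
      using r1 r2 by algebra
    have "\<zeta> - Hm \<mu> z = (\<zeta> * (1 - cnj \<mu> * z^2) - (z^2 - \<mu>)) / (1 - cnj \<mu> * z^2)"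
      unfolding Hm_def blaschke_factor_def using D by (simp add: field_simps)
    also have "\<dots> = (1 + cnj v) * (\<zeta> - z) * (\<zeta> + z) / (1 - cnj \<mu> * z^2)"
      unfolding cmu using poly by (simp add: \<mu>_def)
    finally show ?thesis .
  qed
  have tt: "2 * (norm (1 + v))^2 \<le> 1 - (norm v)^2" using t norm_1p_sq[of v] by simp
  have vpos: "1 - (norm v)^2 > 0" using v by (simp add: abs_square_less_1)
  have hh: "(norm (\<zeta> - Hm \<mu> z))^2 / (1 - (norm (Hm \<mu> z))^2)
          \<le> (norm (\<zeta> - z))^2 / (1 - (norm z)^2) * ((1 + norm z)^2 / (2 * (1 + (norm z)^2)))"
    if z: "norm z < 1" for z
  proof -
    have z2: "norm (z^2) \<le> 1" using z by (simp add: norm_power power_le_one)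
    have D: "1 - cnj \<mu> * z^2 \<noteq> 0" using bf_denom_nz[OF mu z2] .
    define ND where "ND = (norm (1 - cnj \<mu> * z^2))^2"
    have ND: "ND > 0" unfolding ND_def using D by simp
    define s where "s = (norm (\<zeta> - z))^2"
    define p where "p = (norm (\<zeta> + z))^2"
    define A where "A = (norm (1 + v))^2"
    define V where "V = 1 - (norm v)^2"
    define Z where "Z = 1 - (norm z)^2"
    define W where "W = 1 + (norm z)^2"
    have Z: "Z > 0" unfolding Z_def using z by (simp add: abs_square_less_1)
    have W: "W > 0" unfolding W_def by (simp add: add_pos_nonneg)
    have V: "V > 0" unfolding V_def using vpos .
    have num: "(norm (\<zeta> - Hm \<mu> z))^2 = A * s * p / ND"
      unfolding key[OF D] A_def s_def p_def ND_def using n12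
      by (simp add: norm_mult norm_divide power_mult_distrib power_divide)
    have den: "1 - (norm (Hm \<mu> z))^2 = V * Z * W / ND"
    proof -
      have "1 - (norm (Hm \<mu> z))^2 = (1 - (norm \<mu>)^2) * (1 - (norm (z^2))^2) / ND"
        unfolding Hm_def ND_def using bf_norm_sq[OF mu z2] .
      moreover have "1 - (norm (z^2))^2 = Z * W" unfolding Z_def W_def norm_power
        by (simp add: power2_eq_square algebra_simps)
      ultimately show ?thesis unfolding V_def using nmu by simp
    qed
    have lhs: "(norm (\<zeta> - Hm \<mu> z))^2 / (1 - (norm (Hm \<mu> z))^2) = (A / V) * (s / Z) * (p / W)"
      unfolding num den using ND V Z W by (simp add: field_simps)
    have AV: "A / V \<le> 1 / 2" unfolding A_def V_def using tt vpos by (simp add: field_simps)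
    have pb: "p \<le> (1 + norm z)^2"
    proof -
      have "norm (\<zeta> + z) \<le> 1 + norm z" using norm_triangle_ineq[of \<zeta> z] zeta by simp
      then show ?thesis unfolding p_def by (intro power_mono) auto
    qed
    have sZ: "s / Z \<ge> 0" unfolding s_def using Z by simp
    have "(A / V) * (s / Z) * (p / W) \<le> (1/2) * (s / Z) * (p / W)"
      using AV sZ W by (intro mult_right_mono) (auto simp: p_def)
    also have "\<dots> \<le> (1/2) * (s / Z) * ((1 + norm z)^2 / W)"
      using pb sZ W by (intro mult_left_mono divide_right_mono) auto
    also have "\<dots> = (s / Z) * ((1 + norm z)^2 / (2 * W))" by simp
    finally show ?thesis unfolding lhs s_def Z_def W_def .
  qed
  have conv: "(\<lambda>n. (Hm \<mu> ^^ n) z) \<longlonglongrightarrow> \<zeta>" if "norm z < 1" for z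
    by (rule conv_boundary[OF zeta _ hh that]) (rule Hm_ball[OF mu])
  show "DW_point (Hm \<mu>) \<zeta>" unfolding DW_point_def using conv zeta by simp
  have Dz: "1 - cnj \<mu> * \<zeta>^2 \<noteq> 0" using bf_denom_nz[OF mu, of "\<zeta>^2"] zeta by (simp add: norm_power)
  have "deriv (Hm \<mu>) \<zeta> = (2*\<zeta>*(1 - cnj \<mu> * \<mu>)) / (1 - cnj \<mu> * \<zeta>^2)^2"
    by (rule DERIV_imp_deriv[OF Hm_deriv[OF Dz]])
  also have "\<dots> = 2 * ((1 + v) * (1 + cnj v)) / (1 - v * cnj v)"
  proof -
    have vn: "v * cnj v = of_real ((norm v)^2)" using complex_norm_square[of v] by (simp del: of_real_power)
    have vv: "1 - v * cnj v \<noteq> 0"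
    proof
      assume "1 - v * cnj v = 0"
      then have "of_real ((norm v)^2) = (1::complex)" using vn by simp
      then have "(norm v)^2 = 1" using of_real_eq_1_iff by blast
      with vpos show False by simp
    qed
    have poly: "(2*\<zeta>*(1 - cnj \<zeta> * cnj v * (\<zeta> * v))) * (1 - v * cnj v) = 2 * ((1 + v) * (1 + cnj v)) * (1 - cnj \<zeta> * cnj v * \<zeta>^2)^2"
      using r1 r2 by algebra
    show ?thesis unfolding cmu \<mu>_def using vv Dz[unfolded cmu] poly
      by (simp add: field_simps)
  qed
  also have "\<dots> = of_real (2 * (norm (1 + v))^2 / (1 - (norm v)^2))"
  proof -
    have e1: "(complex_of_real (norm (1 + v)))^2 = (1 + v) * (1 + cnj v)" using complex_norm_square[of "1 + v"] by simp
    have e2: "(complex_of_real (norm v))^2 = v * cnj v" using complex_norm_square[of v] by simp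
    show ?thesis by (simp add: e1 e2)
  qed
  finally show "deriv (Hm \<mu>) \<zeta> = of_real (2 * (norm (1 + v))^2 / (1 - (norm v)^2))" .
qed

lemma bf_fd: "1 - cnj a * z \<noteq> 0 \<Longrightarrow> blaschke_factor a field_differentiable at z"
  unfolding blaschke_factor_def field_differentiable_def
  by (rule exI) (auto intro!: derivative_eq_intros)

lemma bf_cont: "1 - cnj a * z \<noteq> 0 \<Longrightarrow> isCont (blaschke_factor a) z"
  using bf_fd field_differentiable_imp_continuous_at by blast

lemma Hm_fd: "1 - cnj \<mu> * z^2 \<noteq> 0 \<Longrightarrow> Hm \<mu> field_differentiable at z"
  using Hm_deriv field_differentiable_def by blast

lemma Hm_cont: "1 - cnj \<mu> * z^2 \<noteq> 0 \<Longrightarrow> isCont (Hm \<mu>) z"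
  using Hm_fd field_differentiable_imp_continuous_at by blast

lemma Hm_nz: "norm \<mu> < 1 \<Longrightarrow> norm z \<le> 1 \<Longrightarrow> 1 - cnj \<mu> * z^2 \<noteq> 0"
  by (rule bf_denom_nz) (auto simp: norm_power power_le_one)

lemma int_case:
  assumes mu: "norm \<mu> < 1" and p: "norm p < 1" and fp: "Hm \<mu> p = p"
  shows "DW_point (Hm \<mu>) p"
proof -
  have mp: "norm (-p) < 1" using p by simp
  define g where "g y = blaschke_factor p (Hm \<mu> (blaschke_factor (-p) y))" for y
  have b1: "norm (blaschke_factor (-p) y) < 1" if "norm y < 1" for y using bf_lt1[OF mp that] .
  have gb: "norm (g y) < 1" if y: "norm y < 1" for y
    unfolding g_def using bf_lt1[OF p Hm_ball[OF mu b1[OF y]]] .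
  have gfd: "g field_differentiable at y" if y: "norm y < 1" for y
  proof -
    have d1: "blaschke_factor (-p) field_differentiable at y"
      by (rule bf_fd, rule bf_denom_nz) (use mp y in auto)
    have d2: "Hm \<mu> field_differentiable at (blaschke_factor (-p) y)"
      by (rule Hm_fd, rule Hm_nz[OF mu]) (use b1[OF y] in auto)
    have d3: "blaschke_factor p field_differentiable at (Hm \<mu> (blaschke_factor (-p) y))"
      by (rule bf_fd, rule bf_denom_nz[OF p]) (use Hm_ball[OF mu b1[OF y]] in auto)
    have "(blaschke_factor p \<circ> (Hm \<mu> \<circ> blaschke_factor (-p))) field_differentiable at y"
      by (intro field_differentiable_compose d1) (use d2 d3 field_differentiable_compose in auto)
    then show ?thesis unfolding g_def comp_def by (simp add: o_def)
  qed
  have hol: "g holomorphic_on ball 0 1"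
    unfolding holomorphic_on_def
  proof
    fix x :: complex assume "x \<in> ball 0 1"
    then have "g field_differentiable at x" using gfd by simp
    then show "g field_differentiable at x within ball 0 1" by (rule field_differentiable_at_within)
  qed
  have gc: "continuous_on (ball 0 1) g" using holomorphic_on_imp_continuous_on[OF hol] .
  have bm0: "blaschke_factor (-p) 0 = p" unfolding blaschke_factor_def by simp
  have bpp: "blaschke_factor p p = 0" unfolding blaschke_factor_def by simp
  have g0: "g 0 = 0" unfolding g_def bm0 fp bpp ..
  have inv1: "blaschke_factor (-p) (blaschke_factor p w) = w" if "norm w \<le> 1" for w
    by (rule bf_inv[OF p bf_denom_nz[OF p that]])
  have inv2: "blaschke_factor p (blaschke_factor (-p) w) = w" if "norm w \<le> 1" for w
    using bf_inv[OF mp bf_denom_nz[OF mp that]] by simp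
  define w1 where "w1 = blaschke_factor p (1/2)"
  define w2 where "w2 = blaschke_factor p (-1/2)"
  have w1b: "norm w1 < 1" unfolding w1_def by (rule bf_lt1[OF p]) simp
  have w2b: "norm w2 < 1" unfolding w2_def by (rule bf_lt1[OF p]) simp
  have gw: "g w1 = g w2" unfolding g_def w1_def w2_def
    by (subst inv1, simp, subst inv1, simp) (simp add: Hm_def power2_eq_square)
  have w12: "w1 \<noteq> w2"
  proof
    assume "w1 = w2"
    then have "blaschke_factor (-p) w1 = blaschke_factor (-p) w2" by simp
    then have "(1/2::complex) = -1/2" unfolding w1_def w2_def by (subst (asm) inv1, simp, subst (asm) inv1, simp)
    then show False by simp
  qed
  have gs: "norm (g y) < norm y" if y: "norm y < 1" and y0: "y \<noteq> 0" for y
  proof -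
    have le: "norm (g y) \<le> norm y" using Schwarz_Lemma(1)[OF hol g0 gb y] .
    have "norm (g y) \<noteq> norm y"
    proof
      assume eq: "norm (g y) = norm y"
      obtain \<alpha> where \<alpha>: "\<And>z. norm z < 1 \<Longrightarrow> g z = \<alpha> * z" "norm \<alpha> = 1"
        using Schwarz_Lemma(3)[OF hol g0 gb y] eq y y0 by blast
      have "\<alpha> * w1 = \<alpha> * w2" using gw \<alpha>(1)[OF w1b] \<alpha>(1)[OF w2b] by simp
      then have "w1 = w2" using \<alpha>(2) by auto
      with w12 show False ..
    qed
    with le show ?thesis by simp
  qed
  have gconv: "(\<lambda>n. (g ^^ n) y) \<longlonglongrightarrow> 0" if "norm y < 1" for y
    by (rule conv_interior[OF gb gc g0 gs that])
  have gnb: "norm ((g ^^ n) y) < 1" if "norm y < 1" for y n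
    by (induction n) (auto simp: that gb)
  have rel: "(Hm \<mu> ^^ n) z = blaschke_factor (-p) ((g ^^ n) (blaschke_factor p z))" if z: "norm z < 1" for z n
  proof (induction n)
    case 0 then show ?case using inv1 z by simp
  next
    case (Suc n)
    define Y where "Y = (g ^^ n) (blaschke_factor p z)"
    have Yb: "norm Y < 1" unfolding Y_def by (rule gnb, rule bf_lt1[OF p z])
    have "(Hm \<mu> ^^ Suc n) z = Hm \<mu> (blaschke_factor (-p) Y)" using Suc unfolding Y_def by simp
    also have "\<dots> = blaschke_factor (-p) (g Y)" unfolding g_def
      by (rule inv1[symmetric]) (use Hm_ball[OF mu b1[OF Yb]] in auto)
    also have "\<dots> = blaschke_factor (-p) ((g ^^ Suc n) (blaschke_factor p z))" unfolding Y_def by simp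
    finally show ?case .
  qed
  have conv: "(\<lambda>n. (Hm \<mu> ^^ n) z) \<longlonglongrightarrow> p" if z: "norm z < 1" for z
  proof -
    have c0: "isCont (blaschke_factor (-p)) 0" by (rule bf_cont) simp
    have "(\<lambda>n. blaschke_factor (-p) ((g ^^ n) (blaschke_factor p z))) \<longlonglongrightarrow> blaschke_factor (-p) 0"
      by (rule isCont_tendsto_compose[OF c0 gconv]) (rule bf_lt1[OF p z])
    then show ?thesis using rel[OF z] bm0 by simp
  qed
  show ?thesis unfolding DW_point_def using conv p by simp
qed

definition dsc :: "complex \<Rightarrow> real" where
  "dsc \<mu> = 1 + 8 * Re \<mu> + 18 * (norm \<mu>)^2 - 27 * (norm \<mu>)^4"

lemma Re_cube_aux: "Re (v * (1 + v)^2) = Re v + 2 * ((Re v)^2 - (Im v)^2) + (Re v)^3 - 3 * Re v * (Im v)^2"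
  by (simp add: power2_eq_square power3_eq_cube algebra_simps)

lemma T_poly:
  fixes a b :: real
  shows "(1 + 18 * (a^2 + b^2) - 27 * (a^2 + b^2)^2) * ((1 + a)^2 + b^2)
     + 8 * (a + 2 * (a^2 - b^2) + a^3 - 3 * a * b^2)
     = (4*a + 1 + 3*(a^2+b^2))^2 * ((4*a + 1 + 3*(a^2+b^2)) - 9 * (a^2+b^2) + 1) / 2"
  by (simp add: power2_eq_square power3_eq_cube field_simps)

lemma Phi_props:
  fixes v :: complex
  assumes v: "norm v < 1"
  defines "\<Phi> \<equiv> ((1 + v) / (1 + cnj v)) * v"
  shows "norm \<Phi> = norm v" "Re \<Phi> * (norm (1 + v))^2 = Re (v * (1 + v)^2)"
    "((1 + cnj v) / (1 + cnj (cnj v))) * cnj v = cnj \<Phi>"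
    "dsc \<Phi> * (norm (1 + v))^2 = (4 * Re v + 1 + 3 * (norm v)^2)^2 * ((4 * Re v + 1 + 3 * (norm v)^2) - 9 * (norm v)^2 + 1) / 2"
proof -
  have nz1: "1 + v \<noteq> 0"
  proof assume "1 + v = 0" then have "v = -1" by (simp add: add_eq_0_iff) with v show False by simp qed
  have nz2: "1 + cnj v \<noteq> 0"
  proof assume "1 + cnj v = 0" then have "cnj v = -1" by (simp add: add_eq_0_iff)
    then have "norm v = 1" by (metis complex_mod_cnj norm_minus_cancel norm_one) with v show False by simp qed
  have n12: "norm (1 + cnj v) = norm (1 + v)"
    by (metis complex_cnj_add complex_cnj_one complex_mod_cnj)
  show nP: "norm \<Phi> = norm v" unfolding \<Phi>_def using n12 nz1 by (simp add: norm_mult norm_divide)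
  define Nc where "Nc = (norm (1 + v))^2"
  have e: "\<Phi> * of_real Nc = v * (1 + v)^2"
  proof -
    have "of_real Nc = (1 + v) * (1 + cnj v)" unfolding Nc_def using complex_norm_square[of "1+v"] by simp
    then show ?thesis unfolding \<Phi>_def using nz2 by (simp add: field_simps power2_eq_square)
  qed
  from arg_cong[where f=Re, OF e] have e2: "Re (\<Phi> * of_real Nc) = Re (v * (1 + v)^2)" .
  have e3: "Re (\<Phi> * of_real Nc) = Re \<Phi> * Nc" by simp
  show RP: "Re \<Phi> * (norm (1 + v))^2 = Re (v * (1 + v)^2)" using e2 e3 unfolding Nc_def by simp
  show "((1 + cnj v) / (1 + cnj (cnj v))) * cnj v = cnj \<Phi>" unfolding \<Phi>_def by simp
  have N: "(norm (1 + v))^2 = (1 + Re v)^2 + (Im v)^2" by (simp add: cmod_power2)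
  have Nv: "(norm v)^2 = (Re v)^2 + (Im v)^2" by (simp add: cmod_power2)
  have n4: "(norm v)^4 = ((norm v)^2)^2" by simp
  have RP2: "Re \<Phi> * ((1 + Re v)^2 + (Im v)^2) = Re v + 2 * ((Re v)^2 - (Im v)^2) + (Re v)^3 - 3 * Re v * (Im v)^2"
    using RP unfolding N Re_cube_aux .
  have "dsc \<Phi> * (norm (1 + v))^2 = (1 + 18 * (norm v)^2 - 27 * ((norm v)^2)^2) * (norm (1 + v))^2 + 8 * (Re \<Phi> * (norm (1 + v))^2)"
    unfolding dsc_def nP by (simp add: algebra_simps)
  also have "\<dots> = (1 + 18 * ((Re v)^2 + (Im v)^2) - 27 * ((Re v)^2 + (Im v)^2)^2) * ((1 + Re v)^2 + (Im v)^2)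
     + 8 * (Re v + 2 * ((Re v)^2 - (Im v)^2) + (Re v)^3 - 3 * Re v * (Im v)^2)"
    unfolding N Nv RP2 ..
  also have "\<dots> = (4 * Re v + 1 + 3 * ((Re v)^2 + (Im v)^2))^2 * ((4 * Re v + 1 + 3 * ((Re v)^2 + (Im v)^2)) - 9 * ((Re v)^2 + (Im v)^2) + 1) / 2"
    by (rule T_poly)
  finally show "dsc \<Phi> * (norm (1 + v))^2 = (4 * Re v + 1 + 3 * (norm v)^2)^2 * ((4 * Re v + 1 + 3 * (norm v)^2) - 9 * (norm v)^2 + 1) / 2"
    unfolding Nv .
qed

lemma root_fixed:
  assumes mu: "norm \<mu> < 1" and z: "norm z < 1" and q: "cnj \<mu> * z^3 + z^2 - z - \<mu> = 0"
  shows "Hm \<mu> z = z"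
proof -
  have D: "1 - cnj \<mu> * z^2 \<noteq> 0" by (rule Hm_nz[OF mu]) (use z in simp)
  have "z^2 - \<mu> = z * (1 - cnj \<mu> * z^2)" using q by (simp add: algebra_simps power2_eq_square power3_eq_cube)
  then show ?thesis unfolding Hm_def blaschke_factor_def using D by simp
qed

lemma root_reflect:
  assumes z: "z \<noteq> 0" and q: "cnj \<mu> * z^3 + z^2 - z - \<mu> = 0"
  shows "cnj \<mu> * (1 / cnj z)^3 + (1 / cnj z)^2 - (1 / cnj z) - \<mu> = 0"
proof -
  have q': "\<mu> * cnj z^3 + cnj z^2 - cnj z - cnj \<mu> = 0" using arg_cong[where f=cnj, OF q] by simp
  have cz: "cnj z \<noteq> 0" using z by simp
  have "cnj \<mu> * (1 / cnj z)^3 + (1 / cnj z)^2 - (1 / cnj z) - \<mu> = - (\<mu> * cnj z^3 + cnj z^2 - cnj z - cnj \<mu>) / cnj z ^ 3"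
    using cz by (simp add: field_simps power3_eq_cube power2_eq_square)
  then show ?thesis using q' by simp
qed

lemma cubic_roots:
  fixes m \<mu> :: complex
  assumes m: "m \<noteq> 0"
  obtains z1 z2 z3 where "m * (z1 + z2 + z3) = -1" "m * (z1*z2 + z1*z3 + z2*z3) = -1" "m * (z1*z2*z3) = \<mu>"
proof -
  define a where "a i = (if i = 0 then -\<mu> else if i = 1 then -1 else if i = 2 then 1 else m)" for i :: nat
  have ca: "a 0 = 0 \<or> (\<exists>i\<in>{1..3}. a i \<noteq> 0)"
    by (rule disjI2, rule bexI[of _ 2]) (auto simp: a_def)
  obtain z1 where "(\<Sum>i\<le>3. a i * z1^i) = 0"
    using fundamental_theorem_of_algebra[OF ca] by blast
  then have q1: "m * z1^3 + z1^2 - z1 - \<mu> = 0"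
    unfolding a_def by (simp add: numeral_3_eq_3 eval_nat_numeral algebra_simps)
  define \<beta> where "\<beta> = 1 + m * z1"
  define \<gamma> where "\<gamma> = z1 + m * z1^2 - 1"
  define b where "b i = (if i = 0 then \<gamma> else if i = 1 then \<beta> else m)" for i :: nat
  have cb: "b 0 = 0 \<or> (\<exists>i\<in>{1..2}. b i \<noteq> 0)"
    by (rule disjI2, rule bexI[of _ 2]) (auto simp: b_def m)
  obtain z2 where "(\<Sum>i\<le>2. b i * z2^i) = 0"
    using fundamental_theorem_of_algebra[OF cb] by blast
  then have q2: "m * z2^2 + \<beta> * z2 + \<gamma> = 0"
    unfolding b_def by (simp add: eval_nat_numeral algebra_simps)
  define z3 where "z3 = -(\<beta> + m * z2) / m"
  have r3: "m * z3 = -(\<beta> + m * z2)" unfolding z3_def using m by simp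
  show ?thesis
  proof
    show "m * (z1 + z2 + z3) = -1" using r3 unfolding \<beta>_def by algebra
    show "m * (z1*z2 + z1*z3 + z2*z3) = -1" using r3 q2 unfolding \<beta>_def \<gamma>_def by algebra
    show "m * (z1*z2*z3) = \<mu>" using r3 q2 q1 unfolding \<beta>_def \<gamma>_def by algebra
  qed
qed


lemma disc_vieta:
  fixes m \<mu> z1 z2 z3 :: complex
  assumes "m * (z1 + z2 + z3) = -1" "m * (z1*z2 + z1*z3 + z2*z3) = -1" "m * (z1*z2*z3) = \<mu>"
  shows "m^4 * ((z1-z2)*(z1-z3)*(z2-z3))^2 = 1 + 4*\<mu> + 4*m + 18*\<mu>*m - 27*(\<mu>*m)^2"
  using assms by algebra

lemma unit_sq:
  fixes a b :: complex
  assumes "cnj a * a = 1" "cnj b * b = 1"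
  shows "(a - b)^2 = - (a * b) * ((a - b) * (cnj a - cnj b))"
  using assms by algebra

lemma ell_exists:
  assumes mu: "norm \<mu> < 1" and d: "dsc \<mu> > 0"
  shows "\<exists>p. norm p < 1 \<and> Hm \<mu> p = p"
proof (cases "\<mu> = 0")
  case True
  then show ?thesis by (intro exI[of _ 0]) (simp add: Hm_def blaschke_factor_def)
next
  case False
  define m where "m = cnj \<mu>"
  have m: "m \<noteq> 0" using False unfolding m_def by simp
  obtain z1 z2 z3 where V: "m * (z1 + z2 + z3) = -1" "m * (z1*z2 + z1*z3 + z2*z3) = -1" "m * (z1*z2*z3) = \<mu>"
    using cubic_roots[OF m] by metis
  have fac: "m * z^3 + z^2 - z - \<mu> = m * ((z - z1) * (z - z2) * (z - z3))" for z
    using V by algebra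
  have roots: "cnj \<mu> * z^3 + z^2 - z - \<mu> = 0" if "z \<in> {z1, z2, z3}" for z
    using that unfolding m_def[symmetric] fac by auto
  have good: "\<exists>p. norm p < 1 \<and> Hm \<mu> p = p" if z: "z \<in> {z1, z2, z3}" and nz: "norm z \<noteq> 1" for z
  proof (cases "norm z < 1")
    case True
    then show ?thesis using root_fixed[OF mu True roots[OF z]] by blast
  next
    case False
    then have gt: "norm z > 1" using nz by simp
    then have z0: "z \<noteq> 0" by auto
    have pn: "norm (1 / cnj z) < 1" using gt by (simp add: norm_divide divide_less_eq)
    show ?thesis using root_fixed[OF mu pn root_reflect[OF z0 roots[OF z]]] pn by blast
  qed
  show ?thesis
  proof (rule ccontr)
    assume no: "\<not> ?thesis"
    have n1: "norm z1 = 1" "norm z2 = 1" "norm z3 = 1" using good no by blast+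
    have cu: "cnj z * z = 1" if "norm z = 1" for z
      using complex_norm_square[of z] that by (simp add: mult.commute)
    have nsq: "(a - b) * (cnj a - cnj b) = of_real ((norm (a - b))^2)" for a b :: complex
      using complex_norm_square[of "a - b"] by simp
    define Qq where "Qq = (norm (z1 - z2))^2 * (norm (z1 - z3))^2 * (norm (z2 - z3))^2"
    have Qq: "Qq \<ge> 0" unfolding Qq_def by simp
    have P: "((z1-z2)*(z1-z3)*(z2-z3))^2 = - ((z1*z2*z3)^2) * of_real Qq"
    proof -
      have "((z1-z2)*(z1-z3)*(z2-z3))^2 = (z1-z2)^2 * (z1-z3)^2 * (z2-z3)^2" by (simp add: power_mult_distrib)
      also have "\<dots> = (- (z1*z2) * ((z1 - z2) * (cnj z1 - cnj z2))) * (- (z1*z3) * ((z1 - z3) * (cnj z1 - cnj z3)))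
          * (- (z2*z3) * ((z2 - z3) * (cnj z2 - cnj z3)))"
        using unit_sq cu n1 by metis
      also have "\<dots> = - ((z1*z2*z3)^2) * (((z1 - z2) * (cnj z1 - cnj z2)) * ((z1 - z3) * (cnj z1 - cnj z3)) * ((z2 - z3) * (cnj z2 - cnj z3)))"
        by (simp add: power2_eq_square algebra_simps)
      also have "\<dots> = - ((z1*z2*z3)^2) * of_real Qq" unfolding nsq Qq_def by simp
      finally show ?thesis .
    qed
    have mm: "\<mu> * m = of_real ((norm \<mu>)^2)" unfolding m_def using complex_norm_square[of \<mu>] by simp
    have "1 + 4*\<mu> + 4*m + 18*\<mu>*m - 27*(\<mu>*m)^2 = m^4 * (- ((z1*z2*z3)^2) * of_real Qq)"
      using disc_vieta[OF V] P by simp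
    also have "\<dots> = - ((m * (z1*z2*z3))^2) * m^2 * of_real Qq" by (simp add: power2_eq_square power4_eq_xxxx algebra_simps)
    also have "\<dots> = - ((\<mu> * m)^2) * of_real Qq" using V(3) by (simp add: power2_eq_square algebra_simps)
    also have "\<dots> = of_real (- (((norm \<mu>)^2)^2) * Qq)" unfolding mm by simp
    finally have E1: "1 + 4*\<mu> + 4*m + 18*\<mu>*m - 27*(\<mu>*m)^2 = of_real (- (((norm \<mu>)^2)^2) * Qq)" .
    have E2: "1 + 4*\<mu> + 4*m + 18*\<mu>*m - 27*(\<mu>*m)^2 = of_real (dsc \<mu>)"
    proof -
      have "\<mu> + cnj \<mu> = 2 * of_real (Re \<mu>)" using complex_add_cnj[of \<mu>] by simp
      then have a0: "4*\<mu> + 4*m = 4 * (2 * of_real (Re \<mu>))" unfolding m_def by (simp add: distrib_left[symmetric])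
      have a: "4*\<mu> + 4*m = of_real (8 * Re \<mu>)" unfolding a0 by simp
      have "1 + 4*\<mu> + 4*m + 18*\<mu>*m - 27*(\<mu>*m)^2 = 1 + (4*\<mu> + 4*m) + 18*(\<mu>*m) - 27*(\<mu>*m)^2" by (simp add: algebra_simps)
      also have "\<dots> = of_real (dsc \<mu>)" unfolding a mm dsc_def by (simp add: power2_eq_square power4_eq_xxxx)
      finally show ?thesis .
    qed
    have "dsc \<mu> = - (((norm \<mu>)^2)^2) * Qq" using E1 E2 of_real_eq_iff by metis
    then have "dsc \<mu> \<le> 0" using Qq by simp
    with d show False by simp
  qed
qed

lemma bd_exists:
  assumes mu: "norm \<mu> < 1" and d: "dsc \<mu> \<le> 0"
  shows "\<exists>v. norm v < 1 \<and> 4 * Re v + 1 + 3 * (norm v)^2 \<le> 0 \<and> \<mu> = ((1 + v) / (1 + cnj v)) * v"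
proof -
  define r where "r = norm \<mu>"
  define x where "x = Re \<mu>"
  have r1: "r < 1" "0 \<le> r" using mu unfolding r_def by auto
  have hx: "-r \<le> x" unfolding r_def x_def using abs_Re_le_cmod[of \<mu>] by linarith
  have dd: "dsc \<mu> = 1 + 8 * x + 18 * r^2 - 27 * r^4" unfolding dsc_def r_def x_def ..
  have r13: "r \<ge> 1/3"
  proof (rule ccontr)
    assume "\<not> r \<ge> 1/3"
    then have "1 - 3*r > 0" by simp
    then have "(1 - 3*r)^3 * (1 + r) > 0" using r1 by simp
    moreover have "(1 - 3*r)^3 * (1 + r) = 1 - 8*r + 18*r^2 - 27*r^4"
      by (simp add: power2_eq_square power3_eq_cube power4_eq_xxxx algebra_simps)
    ultimately have "1 - 8*r + 18*r^2 - 27*r^4 > 0" by simp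
    then have "dsc \<mu> > 0" unfolding dd using hx by linarith
    with d show False by simp
  qed
  define a0 where "a0 = - (1 + 3 * r^2) / 4"
  have a0n: "a0 < 0"
  proof -
    have "0 \<le> 3 * r^2" by simp
    then have "0 < 1 + 3 * r^2" by linarith
    then show ?thesis unfolding a0_def by simp
  qed
  have a0r: "-r \<le> a0"
  proof -
    have "(3*r - 1) * (r - 1) \<le> 0" using r13 r1 by (intro mult_nonneg_nonpos) auto
    then show ?thesis unfolding a0_def by (simp add: algebra_simps power2_eq_square)
  qed
  define V where "V a = Complex a (sqrt (r^2 - a^2))" for a
  have sq_ok: "a^2 \<le> r^2" if "-r \<le> a" "a \<le> a0" for a
  proof -
    have "\<bar>a\<bar> \<le> r" using that a0n by auto
    then show ?thesis using r1 by (metis abs_le_square_iff abs_of_nonneg)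
  qed
  have nV: "norm (V a) = r" if "-r \<le> a" "a \<le> a0" for a
  proof -
    have "norm (V a) = sqrt (a^2 + (sqrt (r^2 - a^2))^2)" unfolding V_def by (simp add: complex_norm)
    also have "\<dots> = sqrt (r^2)" using sq_ok[OF that] by simp
    also have "\<dots> = r" using r1 by simp
    finally show ?thesis .
  qed
  have Veq: "V a = of_real a + \<i> * of_real (sqrt (r^2 - a^2))" for a
    unfolding V_def by (simp add: complex_eq_iff)
  define \<Phi> where "\<Phi> w = ((1 + w) / (1 + cnj w)) * w" for w
  have nzc: "1 + cnj w \<noteq> 0" if "norm w < 1" for w
  proof assume "1 + cnj w = 0" then have "cnj w = -1" by (simp add: add_eq_0_iff)
    then have "norm w = 1" by (metis complex_mod_cnj norm_minus_cancel norm_one) with that show False by simp qed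
  define X where "X a = Re (\<Phi> (V a))" for a
  have cont: "continuous_on {-r..a0} X"
  proof -
    have nz: "1 + cnj (of_real a + \<i> * of_real (sqrt (r^2 - a^2))) \<noteq> 0" if "a \<in> {-r..a0}" for a
      using nzc[of "V a"] nV[of a] that r1 unfolding Veq by auto
    show ?thesis unfolding X_def \<Phi>_def Veq
      by (intro continuous_intros) (use nz in auto)
  qed
  have Xm: "X (-r) = -r"
  proof -
    have "V (-r) = - of_real r" unfolding V_def by (simp add: complex_eq_iff)
    moreover have "1 - of_real r \<noteq> (0::complex)" using r1 by (metis of_real_1 of_real_eq_iff less_irrefl right_minus_eq)
    ultimately show ?thesis unfolding X_def \<Phi>_def by simp
  qed
  have Xa0: "x \<le> X a0"
  proof -
    define v0 where "v0 = V a0"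
    have nv0: "norm v0 = r" unfolding v0_def using nV a0r by simp
    have t0: "4 * Re v0 + 1 + 3 * (norm v0)^2 = 0" unfolding nv0 unfolding v0_def V_def a0_def by (simp add: field_simps)
    have P4: "dsc (\<Phi> v0) * (norm (1 + v0))^2 = 0"
      using Phi_props(4)[of v0] nv0 r1 t0 unfolding \<Phi>_def by simp
    have "1 + v0 \<noteq> 0"
    proof assume "1 + v0 = 0" then have "v0 = -1" by (simp add: add_eq_0_iff) with nv0 r1 show False by simp qed
    then have "dsc (\<Phi> v0) = 0" using P4 by simp
    moreover have "norm (\<Phi> v0) = r" using Phi_props(1)[of v0] nv0 r1 unfolding \<Phi>_def by simp
    ultimately have "1 + 8 * X a0 + 18 * r^2 - 27 * r^4 = 0" unfolding dsc_def X_def v0_def by simp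
    then show ?thesis using d unfolding dd by linarith
  qed
  obtain a1 where a1: "-r \<le> a1" "a1 \<le> a0" "X a1 = x"
    using IVT'[of X "-r" x a0] Xm hx Xa0 a0r cont by auto
  define v where "v = V a1"
  have nv: "norm v = r" unfolding v_def using nV a1 by simp
  have tv: "4 * Re v + 1 + 3 * (norm v)^2 \<le> 0"
  proof -
    have "Re v = a1" unfolding v_def V_def by simp
    then show ?thesis unfolding nv using a1(2) unfolding a0_def by simp
  qed
  have ReP: "Re (\<Phi> v) = Re \<mu>" using a1(3) unfolding X_def v_def x_def .
  have nP: "norm (\<Phi> v) = norm \<mu>" using Phi_props(1)[of v] nv r1 unfolding \<Phi>_def r_def by simp
  have "(Im (\<Phi> v))^2 = (Im \<mu>)^2"
  proof -
    have "(norm (\<Phi> v))^2 = (norm \<mu>)^2" using nP by simp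
    then show ?thesis unfolding cmod_power2 ReP by simp
  qed
  then have "Im (\<Phi> v) = Im \<mu> \<or> Im (\<Phi> v) = - Im \<mu>" using power2_eq_iff by blast
  then show ?thesis
  proof
    assume "Im (\<Phi> v) = Im \<mu>"
    then have "\<Phi> v = \<mu>" using ReP by (simp add: complex_eq_iff)
    then show ?thesis using nv r1 tv unfolding \<Phi>_def by (intro exI[of _ v]) auto
  next
    assume im: "Im (\<Phi> v) = - Im \<mu>"
    have c: "\<Phi> (cnj v) = cnj (\<Phi> v)" using Phi_props(3)[of v] nv r1 unfolding \<Phi>_def by simp
    then have "\<Phi> (cnj v) = \<mu>" using ReP im by (simp add: complex_eq_iff)
    then show ?thesis using nv r1 tv unfolding \<Phi>_def by (intro exI[of _ "cnj v"]) auto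
  qed
qed


lemma bd_class:
  assumes mu: "norm \<mu> < 1" and d: "dsc \<mu> \<le> 0"
  shows "\<exists>\<zeta> m. DW_point (Hm \<mu>) \<zeta> \<and> norm \<zeta> = 1 \<and> deriv (Hm \<mu>) \<zeta> = of_real m \<and>
      (dsc \<mu> = 0 \<longrightarrow> m = 1) \<and> (dsc \<mu> < 0 \<longrightarrow> m < 1)"
proof -
  obtain v where v: "norm v < 1" and t: "4 * Re v + 1 + 3 * (norm v)^2 \<le> 0"
    and mv: "\<mu> = ((1 + v) / (1 + cnj v)) * v"
    using bd_exists[OF mu d] by blast
  define tt where "tt = 4 * Re v + 1 + 3 * (norm v)^2"
  define s where "s = (norm v)^2"
  define m where "m = 2 * (norm (1 + v))^2 / (1 - (norm v)^2)"
  note bc = bd_case[OF v t]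
  have DW: "DW_point (Hm \<mu>) ((1 + v) / (1 + cnj v))" using bc(3) unfolding mv .
  have de: "deriv (Hm \<mu>) ((1 + v) / (1 + cnj v)) = of_real m" using bc(4) unfolding mv m_def .
  have spos: "1 - s > 0" unfolding s_def using v by (simp add: abs_square_less_1)
  have mt: "m = 1 + tt / (1 - s)"
  proof -
    have "2 * (norm (1 + v))^2 = (1 - s) + tt" unfolding tt_def s_def using norm_1p_sq[of v] by simp
    then show ?thesis unfolding m_def s_def[symmetric] using spos by (simp add: field_simps)
  qed
  have T: "dsc \<mu> * (norm (1 + v))^2 = tt^2 * (tt - 9 * s + 1) / 2"
    using Phi_props(4)[OF v] unfolding mv[symmetric] tt_def s_def .
  have s9: "s \<ge> 1/9"
  proof -
    have "- norm v \<le> Re v" using abs_Re_le_cmod[of v] by linarith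
    then have "3 * (norm v)^2 - 4 * norm v + 1 \<le> 0" using t by linarith
    then have "(3 * norm v - 1) * (norm v - 1) \<le> 0" by (simp add: algebra_simps power2_eq_square)
    moreover have "norm v - 1 < 0" using v by simp
    ultimately have "3 * norm v - 1 \<ge> 0"
    proof (cases "3 * norm v - 1 \<ge> 0")
      case False
      then have "3 * norm v - 1 < 0" by simp
      then have "(3 * norm v - 1) * (norm v - 1) > 0" using \<open>norm v - 1 < 0\<close> by (rule mult_neg_neg)
      with \<open>(3 * norm v - 1) * (norm v - 1) \<le> 0\<close> show ?thesis by simp
    qed simp
    then have "norm v \<ge> 1/3" by simp
    then have "(1/3)^2 \<le> (norm v)^2" by (intro power_mono) auto
    then show ?thesis unfolding s_def by (simp add: power2_eq_square)
  qed
  have n1v: "(norm (1 + v))^2 > 0"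
  proof -
    have "1 + v \<noteq> 0"
    proof assume "1 + v = 0" then have "v = -1" by (simp add: add_eq_0_iff) with v show False by simp qed
    then show ?thesis by simp
  qed
  have ttle: "tt \<le> 0" unfolding tt_def using t .
  have neg: "tt^2 * (tt - 9 * s + 1) / 2 < 0" if "tt < 0"
  proof -
    have "tt - 9 * s + 1 < 0" using that s9 by simp
    moreover have "tt^2 > 0" using that by simp
    ultimately show ?thesis by (simp add: mult_pos_neg)
  qed
  show ?thesis
  proof (intro exI conjI impI)
    show "DW_point (Hm \<mu>) ((1 + v) / (1 + cnj v))" by (rule DW)
    show "norm ((1 + v) / (1 + cnj v)) = 1" by (rule bc(2))
    show "deriv (Hm \<mu>) ((1 + v) / (1 + cnj v)) = of_real m" by (rule de)
  next
    assume d0: "dsc \<mu> = 0"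
    have "tt = 0"
    proof (rule ccontr)
      assume "tt \<noteq> 0" then have "tt < 0" using ttle by simp
      then have "tt^2 * (tt - 9 * s + 1) / 2 < 0" by (rule neg)
      moreover have "tt^2 * (tt - 9 * s + 1) / 2 = 0" using T d0 by simp
      ultimately show False by linarith
    qed
    then show "m = 1" unfolding mt by simp
  next
    assume dn: "dsc \<mu> < 0"
    have "tt \<noteq> 0"
    proof
      assume "tt = 0"
      then have "dsc \<mu> * (norm (1 + v))^2 = 0" using T by simp
      with n1v dn show False by simp
    qed
    then have "tt < 0" using ttle by simp
    then have "tt / (1 - s) < 0" using spos by (simp add: divide_neg_pos)
    then show "m < 1" unfolding mt by simp
  qed
qed

lemma classify:
  assumes mu: "norm \<mu> < 1"
  shows "(dsc \<mu> > 0 \<longrightarrow> elliptic (Hm \<mu>)) \<and> (dsc \<mu> = 0 \<longrightarrow> parabolic (Hm \<mu>))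
       \<and> (dsc \<mu> < 0 \<longrightarrow> hyperbolic (Hm \<mu>))"
proof (intro conjI impI)
  assume "dsc \<mu> > 0"
  then obtain p where p: "norm p < 1" "Hm \<mu> p = p" using ell_exists[OF mu] by blast
  then show "elliptic (Hm \<mu>)" unfolding elliptic_def using int_case[OF mu p] by auto
next
  assume d0: "dsc \<mu> = 0"
  then obtain \<zeta> m where z: "DW_point (Hm \<mu>) \<zeta>" "norm \<zeta> = 1" "deriv (Hm \<mu>) \<zeta> = of_real m" "m = 1"
    using bd_class[OF mu] by force
  then show "parabolic (Hm \<mu>)" unfolding parabolic_def by auto
next
  assume d0: "dsc \<mu> < 0"
  then obtain \<zeta> m where z: "DW_point (Hm \<mu>) \<zeta>" "norm \<zeta> = 1" "deriv (Hm \<mu>) \<zeta> = of_real m" "m < 1"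
    using bd_class[OF mu] by force
  then show "hyperbolic (Hm \<mu>)" unfolding hyperbolic_def by auto
qed

lemma ev_nz:
  fixes f :: "complex \<Rightarrow> complex"
  assumes "isCont f y0" "f y0 \<noteq> (0::complex)"
  shows "eventually (\<lambda>y. f y \<noteq> 0) (nhds y0)"
proof -
  obtain e where e: "e > 0" "\<And>y. dist y0 y < e \<Longrightarrow> f y \<noteq> 0"
    using continuous_at_avoid[of y0 f 0] assms by auto
  show ?thesis unfolding eventually_nhds_metric
  proof (intro exI conjI allI impI)
    show "e > 0" by (rule e(1))
    fix y assume "dist y y0 < e"
    then have "dist y0 y < e" by (simp add: dist_commute)
    then show "f y \<noteq> 0" by (rule e(2))
  qed
qed

lemma transfer_mob:
  fixes G c :: "complex \<Rightarrow> complex" and a \<kappa> \<mu> :: complex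
  assumes a: "norm a < 1" and k: "norm \<kappa> = 1" and mu: "norm \<mu> < 1"
    and cc: "\<And>z. norm z \<le> 1 \<Longrightarrow> isCont c z \<and> c z \<noteq> 0"
    and Geq: "\<And>y. c y \<noteq> 0 \<Longrightarrow> G y = blaschke_factor (-a) (cnj \<kappa> * Hm \<mu> (\<kappa> * blaschke_factor a y))"
  shows "(elliptic (Hm \<mu>) \<longrightarrow> elliptic G) \<and> (parabolic (Hm \<mu>) \<longrightarrow> parabolic G) \<and> (hyperbolic (Hm \<mu>) \<longrightarrow> hyperbolic G)"
proof -
  define A where "A y = \<kappa> * blaschke_factor a y" for y
  define Ai where "Ai y = blaschke_factor (-a) (cnj \<kappa> * y)" for y
  have ma: "norm (-a) < 1" using a by simp
  have kk: "cnj \<kappa> * \<kappa> = 1" using complex_norm_square[of \<kappa>] k by (simp add: mult.commute)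
  have nk: "norm (cnj \<kappa> * y) = norm y" for y using k by (simp add: norm_mult)
  have Anorm: "norm (A y) = norm (blaschke_factor a y)" for y unfolding A_def using k by (simp add: norm_mult)
  have Aball: "A z \<in> ball 0 1" if "z \<in> ball 0 1" for z using Anorm bf_lt1[OF a] that by simp
  have Aib: "norm (Ai y) < 1" if "norm y < 1" for y unfolding Ai_def using bf_lt1[OF ma] nk that by simp
  have Ais: "norm (Ai y) = 1" if "norm y = 1" for y unfolding Ai_def using bf_eq1[OF ma] nk that by simp
  have AiA: "A (Ai y) = y" if "norm y \<le> 1" for y
  proof -
    have "1 - cnj (-a) * (cnj \<kappa> * y) \<noteq> 0" by (rule bf_denom_nz[OF ma]) (use nk that in simp)
    then have "blaschke_factor (- (-a)) (blaschke_factor (-a) (cnj \<kappa> * y)) = cnj \<kappa> * y" by (rule bf_inv[OF ma])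
    then have "blaschke_factor a (Ai y) = cnj \<kappa> * y" unfolding Ai_def by simp
    then have "A (Ai y) = \<kappa> * (cnj \<kappa> * y)" unfolding A_def by simp
    also have "\<dots> = (cnj \<kappa> * \<kappa>) * y" by (simp add: algebra_simps)
    finally show ?thesis using kk by simp
  qed
  have AiA2: "Ai (A y) = y" if "1 - cnj a * y \<noteq> 0" for y
    unfolding Ai_def A_def using kk bf_inv[OF a that] by (simp add: mult.assoc[symmetric])
  have Gc: "G y = Ai (Hm \<mu> (A y))" if "c y \<noteq> 0" for y unfolding Ai_def A_def using Geq[OF that] .
  have Ai_cont: "isCont Ai z" if "norm z \<le> 1" for z
  proof -
    have "isCont (blaschke_factor (-a)) (cnj \<kappa> * z)" by (rule bf_cont, rule bf_denom_nz[OF ma]) (use nk that in simp)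
    moreover have "isCont (\<lambda>y. cnj \<kappa> * y) z" by (intro continuous_intros)
    ultimately have "isCont (\<lambda>y. blaschke_factor (-a) (cnj \<kappa> * y)) z"
      using isCont_o2 by blast
    then show ?thesis unfolding Ai_def .
  qed
  have aden: "isCont (\<lambda>y. 1 - cnj a * y) z" for z by (intro continuous_intros)
  show ?thesis
  proof (rule transfer[of "Hm \<mu>" A Ai G])
    show "\<And>z. z \<in> ball 0 1 \<Longrightarrow> Hm \<mu> z \<in> ball 0 1" using Hm_ball[OF mu] by simp
    show "\<And>z. z \<in> ball 0 1 \<Longrightarrow> A z \<in> ball 0 1" by (rule Aball)
    show "\<And>y. y \<in> ball 0 1 \<Longrightarrow> A (Ai y) = y" using AiA by simp
    show "\<And>y. y \<in> ball 0 1 \<Longrightarrow> Ai (A y) = y" using AiA2 bf_denom_nz[OF a] by simp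
    show "\<And>z. z \<in> ball 0 1 \<Longrightarrow> G z = Ai (Hm \<mu> (A z))" using Gc cc by simp
    show "\<And>z. z \<in> ball 0 1 \<Longrightarrow> Ai z \<in> ball 0 1" using Aib by simp
    show "\<And>z. norm z = 1 \<Longrightarrow> norm (Ai z) = 1" by (rule Ais)
    show "\<And>z. z \<in> cball 0 1 \<Longrightarrow> isCont Ai z" using Ai_cont by simp
    show "\<And>z. norm z = 1 \<Longrightarrow> isCont (Hm \<mu>) z" using Hm_cont Hm_nz[OF mu] by simp
    show "\<And>z. norm z = 1 \<Longrightarrow> \<forall>\<^sub>F y in nhds (Ai z). G y = Ai (Hm \<mu> (A y))"
    proof -
      fix z :: complex assume z: "norm z = 1"
      have "norm (Ai z) \<le> 1" using Ais[OF z] by simp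
      then have "isCont c (Ai z) \<and> c (Ai z) \<noteq> 0" by (rule cc)
      then have "eventually (\<lambda>y. c y \<noteq> 0) (nhds (Ai z))" using ev_nz by blast
      then show "\<forall>\<^sub>F y in nhds (Ai z). G y = Ai (Hm \<mu> (A y))" by (rule eventually_mono) (rule Gc)
    qed
    show "\<And>z. norm z = 1 \<Longrightarrow> \<forall>\<^sub>F y in nhds (Ai z). Ai (A y) = y"
    proof -
      fix z :: complex assume z: "norm z = 1"
      have "1 - cnj a * Ai z \<noteq> 0" by (rule bf_denom_nz[OF a]) (use Ais[OF z] in simp)
      then have "eventually (\<lambda>y. 1 - cnj a * y \<noteq> 0) (nhds (Ai z))" by (rule ev_nz[OF aden])
      then show "\<forall>\<^sub>F y in nhds (Ai z). Ai (A y) = y" by (rule eventually_mono) (rule AiA2)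
    qed
    show "\<And>z. norm z = 1 \<Longrightarrow> A (Ai z) = z" using AiA by simp
    show "\<And>z. norm z = 1 \<Longrightarrow> A field_differentiable at (Ai z)"
    proof -
      fix z :: complex assume z: "norm z = 1"
      have "blaschke_factor a field_differentiable at (Ai z)"
        by (rule bf_fd, rule bf_denom_nz[OF a]) (use Ais[OF z] in simp)
      then show "A field_differentiable at (Ai z)" unfolding A_def
        by (intro field_differentiable_mult field_differentiable_const)
    qed
    show "\<And>z. norm z = 1 \<Longrightarrow> Ai field_differentiable at z"
    proof -
      fix z :: complex assume z: "norm z = 1"
      have d1: "(\<lambda>y. cnj \<kappa> * y) field_differentiable at z"
        by (intro field_differentiable_mult field_differentiable_const field_differentiable_ident)
      have d2: "blaschke_factor (-a) field_differentiable at (cnj \<kappa> * z)"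
        by (rule bf_fd, rule bf_denom_nz[OF ma]) (use nk z in simp)
      have "(blaschke_factor (-a) \<circ> (\<lambda>y. cnj \<kappa> * y)) field_differentiable at z"
        by (rule field_differentiable_compose[OF d1 d2])
      then show "Ai field_differentiable at z" unfolding Ai_def comp_def .
    qed
    show "\<And>z. norm z = 1 \<Longrightarrow> Hm \<mu> field_differentiable at z" using Hm_fd Hm_nz[OF mu] by simp
  qed
qed

lemma F_class:
  assumes mu: "norm \<mu> < 1"
  shows "elliptic (\<lambda>z. (blaschke_factor \<mu> z)^2) \<longleftrightarrow> dsc \<mu> > 0"
proof -
  define F where "F = (\<lambda>z. (blaschke_factor \<mu> z)^2)"
  define c where "c y = 1 - cnj \<mu> * (blaschke_factor \<mu> y)^2" for y
  have cc: "isCont c z \<and> c z \<noteq> 0" if z: "norm z \<le> 1" for z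
  proof
    have "isCont (blaschke_factor \<mu>) z" by (rule bf_cont, rule bf_denom_nz[OF mu z])
    then show "isCont c z" unfolding c_def by (intro continuous_intros)
    have "norm ((blaschke_factor \<mu> z)^2) \<le> 1"
      using bf_le1[OF mu z] by (simp add: norm_power power_le_one)
    then show "c z \<noteq> 0" unfolding c_def by (rule bf_denom_nz[OF mu])
  qed
  have Geq: "F y = blaschke_factor (-\<mu>) (cnj 1 * Hm \<mu> (1 * blaschke_factor \<mu> y))" if "c y \<noteq> 0" for y
    unfolding F_def Hm_def using bf_inv[OF mu that[unfolded c_def]] by simp
  have T: "(elliptic (Hm \<mu>) \<longrightarrow> elliptic F) \<and> (parabolic (Hm \<mu>) \<longrightarrow> parabolic F) \<and> (hyperbolic (Hm \<mu>) \<longrightarrow> hyperbolic F)"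
    by (rule transfer_mob[OF mu _ mu cc Geq]) auto
  note C = classify[OF mu]
  show ?thesis unfolding F_def[symmetric]
  proof
    assume e: "elliptic F"
    show "dsc \<mu> > 0"
    proof (rule ccontr)
      assume "\<not> dsc \<mu> > 0"
      then have "dsc \<mu> = 0 \<or> dsc \<mu> < 0" by linarith
      then show False
      proof
        assume "dsc \<mu> = 0" then have "parabolic F" using C T by blast
        with e show False using ell_not_par by blast
      next
        assume "dsc \<mu> < 0" then have "hyperbolic F" using C T by blast
        with e show False using ell_not_hyp by blast
      qed
    qed
  next
    assume "dsc \<mu> > 0" then show "elliptic F" using C T by blast
  qed
qed

lemma E2_eq: "E2 = {\<mu>. norm \<mu> < 1 \<and> dsc \<mu> > 0}"
  unfolding E2_def using F_class by auto

lemma dsc_cont: "continuous_on UNIV dsc"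
  unfolding dsc_def by (intro continuous_intros)

lemma E2_open: "open E2"
proof -
  have "E2 = ball 0 1 \<inter> {\<mu>. 0 < dsc \<mu>}" unfolding E2_eq by auto
  moreover have "open {\<mu>. (\<lambda>_. 0) \<mu> < dsc \<mu>}" by (rule open_Collect_less) (auto intro: dsc_cont continuous_intros)
  ultimately show ?thesis using open_Int[OF open_ball] by metis
qed

lemma closure_E2_sub: "closure E2 \<subseteq> {\<mu>. 0 \<le> dsc \<mu>}"
proof (rule closure_minimal)
  show "E2 \<subseteq> {\<mu>. 0 \<le> dsc \<mu>}" unfolding E2_eq by auto
  show "closed {\<mu>. 0 \<le> dsc \<mu>}"
    using closed_Collect_le[of "\<lambda>_. 0" dsc] dsc_cont by (auto intro: continuous_intros)
qed

lemma dsc0_in_closure: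
  assumes mu: "norm \<mu> < 1" and d: "dsc \<mu> = 0"
  shows "\<mu> \<in> closure E2"
proof -
  define r where "r = norm \<mu>"
  define x where "x = Re \<mu>"
  have r1: "0 \<le> r" "r < 1" using mu unfolding r_def by auto
  have xr: "x \<le> r" unfolding x_def r_def using abs_Re_le_cmod[of \<mu>] by linarith
  have xne: "x \<noteq> r"
  proof
    assume "x = r"
    have "(1 - r) * (1 + 3*r)^3 = 1 + 8*r + 18*r^2 - 27*r^4"
      by (simp add: power2_eq_square power3_eq_cube power4_eq_xxxx algebra_simps)
    moreover have "(1 - r) * (1 + 3*r)^3 > 0" using r1 by simp
    ultimately have "dsc \<mu> > 0" unfolding dsc_def \<open>x = r\<close>[unfolded x_def] r_def[symmetric] by simp
    with d show False by simp
  qed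
  then have xr': "x < r" using xr by simp
  define \<sigma> :: real where "\<sigma> = (if Im \<mu> \<ge> 0 then 1 else -1)"
  define \<delta> where "\<delta> n = (r - x) / (2 + real n)" for n :: nat
  define M where "M n = Complex (x + \<delta> n) (\<sigma> * sqrt (r^2 - (x + \<delta> n)^2))" for n
  have dpos: "\<delta> n > 0" for n unfolding \<delta>_def using xr' by simp
  have dle: "x + \<delta> n \<le> r" for n
  proof -
    have "(r - x) / (2 + real n) \<le> (r - x) / 1" by (rule divide_left_mono) (use xr' in auto)
    then have "\<delta> n \<le> r - x" unfolding \<delta>_def by simp
    then show ?thesis by simp
  qed
  have xge: "-r \<le> x" unfolding x_def r_def using abs_Re_le_cmod[of \<mu>] by linarith
  have sq: "(x + \<delta> n)^2 \<le> r^2" for n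
  proof -
    have "\<bar>x + \<delta> n\<bar> \<le> r" using dle[of n] xge dpos[of n] by auto
    then show ?thesis using r1 by (metis abs_le_square_iff abs_of_nonneg)
  qed
  have sig: "\<bar>\<sigma>\<bar> = 1" unfolding \<sigma>_def by simp
  have nM: "norm (M n) = r" for n
  proof -
    have "(norm (M n))^2 = (x + \<delta> n)^2 + \<sigma>^2 * (sqrt (r^2 - (x + \<delta> n)^2))^2"
      unfolding M_def by (simp add: cmod_power2 power_mult_distrib)
    also have "\<dots> = r^2"
    proof -
      have s2: "\<sigma>^2 = 1" unfolding \<sigma>_def by simp
      have "(sqrt (r^2 - (x + \<delta> n)^2))^2 = r^2 - (x + \<delta> n)^2" using sq[of n] by simp
      then show ?thesis unfolding s2 by simp
    qed
    finally show ?thesis using r1 by (simp add: power2_eq_iff_nonneg)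
  qed
  have dscM: "dsc (M n) > 0" for n
  proof -
    have "dsc (M n) = dsc \<mu> + 8 * \<delta> n" unfolding dsc_def nM r_def[symmetric] x_def[symmetric] unfolding M_def x_def r_def
      by simp
    then show ?thesis using d dpos[of n] by simp
  qed
  have ME2: "M n \<in> E2" for n unfolding E2_eq using nM dscM r1 by simp
  have dlim: "\<delta> \<longlonglongrightarrow> 0"
  proof -
    have "filterlim (\<lambda>n. 2 + real n) at_top sequentially"
      by (rule filterlim_tendsto_add_at_top[OF tendsto_const filterlim_real_sequentially])
    then have "filterlim (\<lambda>n. 2 + real n) at_infinity sequentially"
      by (rule filterlim_at_top_imp_at_infinity)
    then have "(\<lambda>n. (r - x) / (2 + real n)) \<longlonglongrightarrow> 0"
      by (intro tendsto_divide_0[OF tendsto_const])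
    then show ?thesis unfolding \<delta>_def by simp
  qed
  have "M \<longlonglongrightarrow> Complex (x + 0) (\<sigma> * sqrt (r^2 - (x + 0)^2))"
    unfolding M_def by (intro tendsto_intros dlim)
  moreover have "Complex (x + 0) (\<sigma> * sqrt (r^2 - (x + 0)^2)) = \<mu>"
  proof -
    have "r^2 - x^2 = (Im \<mu>)^2" unfolding r_def x_def by (simp add: cmod_power2)
    then have "sqrt (r^2 - x^2) = \<bar>Im \<mu>\<bar>" by simp
    then have "\<sigma> * sqrt (r^2 - x^2) = Im \<mu>" unfolding \<sigma>_def by auto
    then show ?thesis unfolding x_def by (simp add: complex_eq_iff)
  qed
  ultimately show ?thesis unfolding closure_sequential using ME2 by (intro exI[of _ M]) auto
qed

lemma B_crit:
  fixes w u c :: complex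
  assumes "norm w < 1" "norm u < 1" "norm c < 1"
    and "deriv (\<lambda>z. blaschke_factor w z * blaschke_factor u z) c = 0"
  shows "(2*c - w - u) * ((1 - cnj w * c) * (1 - cnj u * c)) - (c - w) * (c - u) * (2 * cnj w * cnj u * c - cnj w - cnj u) = 0"
proof -
  define P where "P z = (z - w) * (z - u)" for z
  define Q where "Q z = (1 - cnj w * z) * (1 - cnj u * z)" for z
  have Beq: "(\<lambda>z. blaschke_factor w z * blaschke_factor u z) = (\<lambda>z. P z / Q z)"
    unfolding P_def Q_def blaschke_factor_def by (simp add: fun_eq_iff)
  have Qc: "Q c \<noteq> 0" unfolding Q_def using bf_denom_nz assms by (simp add: less_imp_le)
  have dP: "(P has_field_derivative (2*c - w - u)) (at c)" unfolding P_def
    by (auto intro!: derivative_eq_intros simp: algebra_simps)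
  have dQ: "(Q has_field_derivative (2 * cnj w * cnj u * c - cnj w - cnj u)) (at c)" unfolding Q_def
    by (auto intro!: derivative_eq_intros simp: algebra_simps)
  have "((\<lambda>z. P z / Q z) has_field_derivative ((2*c - w - u) * Q c - P c * (2 * cnj w * cnj u * c - cnj w - cnj u)) / (Q c * Q c)) (at c)"
    by (rule DERIV_divide[OF dP dQ Qc])
  then have "((2*c - w - u) * Q c - P c * (2 * cnj w * cnj u * c - cnj w - cnj u)) / (Q c * Q c) = 0"
    using assms(4) unfolding Beq by (simp add: DERIV_imp_deriv)
  then show ?thesis using Qc unfolding P_def Q_def by simp
qed

lemma alg_rel:
  fixes w u c W U a :: complex
  assumes h1: "a * ((1 - W*c)*(1 - U*c)) = (c - w)*(c - u)"
    and h2: "(2*c - w - u) * ((1 - W * c) * (1 - U * c)) - (c - w) * (c - u) * (2 * W * U * c - W - U) = 0"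
    and Qc: "(1 - W*c)*(1 - U*c) \<noteq> 0"
  shows "w*u - a = (1 - a*W*U) * c^2" "-(w+u) + a*(W+U) = -2*(1 - a*W*U)*c"
proof -
  have "((1 - W*c)*(1 - U*c)) * ((2*c - w - u) - a * (2 * W * U * c - W - U)) = 0"
    using h1 h2 by algebra
  then have d: "(2*c - w - u) - a * (2 * W * U * c - W - U) = 0" using Qc by simp
  show r2: "-(w+u) + a*(W+U) = -2*(1 - a*W*U)*c" using d by algebra
  show "w*u - a = (1 - a*W*U) * c^2" using d h1 by algebra
qed

lemma alg_F:
  fixes w u c W U a :: complex
  assumes "w*u - a = (1 - a*W*U) * c^2" "-(w+u) + a*(W+U) = -2*(1 - a*W*U)*c"
  shows "(y - w)*(y - u) - a*((1 - W*y)*(1 - U*y)) = (1 - a*W*U) * (y - c)^2"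
  using assms by algebra

lemma alg_F2:
  fixes w u C W U A :: complex
  assumes "W*U - A = (1 - A*w*u) * C^2" "-(W+U) + A*(w+u) = -2*(1 - A*w*u)*C"
  shows "(1 - W*y)*(1 - U*y) - A*((y - w)*(y - u)) = (1 - A*w*u) * (1 - C*y)^2"
  using assms by algebra

lemma alg_real:
  fixes w u c W U C :: complex
  assumes h2: "(2*c - w - u) * ((1 - W * c) * (1 - U * c)) - (c - w) * (c - u) * (2 * W * U * c - W - U) = 0"
    and h2c: "(2*C - W - U) * ((1 - w * C) * (1 - u * C)) - (C - W) * (C - U) * (2 * w * u * C - w - u) = 0"
    and cC: "c * C \<noteq> 1"
  shows "(1 - W*c)*(1 - U*c) - W*U*((c - w)*(c - u)) = (1 - w*C)*(1 - u*C) - w*u*((C - W)*(C - U))"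
proof -
  define g where "g = W*U*(w+u) - (W+U)"
  define g' where "g' = w*u*(W+U) - (w+u)"
  have e1: "g*c^2 + 2*(1 - w*u*W*U)*c + g' = 0" using h2 unfolding g_def g'_def by algebra
  have e2: "g'*C^2 + 2*(1 - w*u*W*U)*C + g = 0" using h2c unfolding g_def g'_def by algebra
  have "(g*c - g'*C) * (c*C - 1) = 0" using e1 e2 by algebra
  then have gc: "g*c = g'*C" using cC by simp
  show ?thesis using gc unfolding g_def g'_def by algebra
qed

lemma alg_final:
  fixes X a A c C \<kappa> \<kappa>' \<omega> Y lam lam' x3 x3' i3 i3' :: complex
  assumes hE: "X - a = \<omega> * Y * (1 - A * X)"
    and hk: "\<kappa> * x3' = \<omega> * x3" and x3: "x3 = 1 - c * A" and x3': "x3' = 1 - C * a"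
    and kk: "\<kappa> * \<kappa>' = 1"
    and hl: "lam * x3' = - \<kappa> * (a - c)" and hl': "lam' * x3 = - \<kappa>' * (A - C)"
    and i3: "x3 * i3 = 1" and i3': "x3' * i3' = 1"
  shows "\<kappa> * (X - c) * (1 - lam' * \<kappa>^2 * Y) = (\<kappa>^2 * Y - lam) * (1 - C * X)"
  using assms by algebra

lemma exp_2arg:
  assumes x: "x \<noteq> 0"
  shows "exp (\<i> * (2 * complex_of_real (Arg x))) = x / cnj x"
proof -
  have "exp (\<i> * (2 * complex_of_real (Arg x))) = cis (Arg x + Arg x)"
    by (simp add: cis_conv_exp algebra_simps)
  also have "\<dots> = cis (Arg x) * cis (Arg x)" by (simp add: cis_mult)
  also have "\<dots> = sgn x * sgn x" using cis_Arg[OF x] by simp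
  also have "\<dots> = x * x / (of_real (norm x) * of_real (norm x))"
  proof -
    have "sgn x = x / of_real (norm x)" by (simp add: sgn_div_norm scaleR_conv_of_real divide_inverse mult.commute)
    then show ?thesis by simp
  qed
  also have "\<dots> = x * x / (x * cnj x)"
    using complex_norm_square[of x] by (simp add: power2_eq_square)
  also have "\<dots> = x / cnj x" using x by simp
  finally show ?thesis .
qed

lemma cnj_nz: "x \<noteq> 0 \<Longrightarrow> cnj x \<noteq> 0" by simp

lemma unit_frac: "x \<noteq> 0 \<Longrightarrow> norm (x / cnj x) = 1" by (simp add: norm_divide)


theorem theorem3p4:
  fixes u w c :: complex
  defines "B \<equiv> (\<lambda>z. blaschke_factor w z * blaschke_factor u z)"
  assumes "w \<in> ball 0 1" and "u \<in> ball 0 1"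
    and "c \<in> ball 0 1" and "deriv B c = 0"
  defines "lam \<equiv> exp (\<i> * (of_real pi + 2 * of_real (Arg (1 - cnj c * w))
                 + 2 * of_real (Arg (1 - cnj c * u)) + 2 * of_real (Arg (1 - c * cnj (B c)))))
               * ((B c - c) / (1 - cnj c * B c))"
  shows "(elliptic B \<longleftrightarrow> lam \<in> E2)
       \<and> (parabolic B \<longleftrightarrow> lam \<in> frontier E2 \<inter> ball 0 1)
       \<and> (hyperbolic B \<longleftrightarrow> lam \<in> ball 0 1 - closure E2)"
proof -
  have nw: "norm w < 1" using \<open>w \<in> ball 0 1\<close> by simp
  have nu: "norm u < 1" using \<open>u \<in> ball 0 1\<close> by simp
  have nc: "norm c < 1" using \<open>c \<in> ball 0 1\<close> by simp
  define P where "P y = (y - w) * (y - u)" for y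
  define Q where "Q y = (1 - cnj w * y) * (1 - cnj u * y)" for y
  have Bf: "B y = P y / Q y" for y unfolding B_def P_def Q_def blaschke_factor_def by simp
  define a where "a = B c"
  have Qnz: "Q y \<noteq> 0" if "norm y \<le> 1" for y
    unfolding Q_def using bf_denom_nz[OF nw that] bf_denom_nz[OF nu that] by simp
  have Ble: "norm (B y) \<le> 1" if "norm y \<le> 1" for y
  proof -
    have "norm (B y) = norm (blaschke_factor w y) * norm (blaschke_factor u y)" unfolding B_def by (simp add: norm_mult)
    also have "\<dots> \<le> 1 * 1" using bf_le1[OF nw that] bf_le1[OF nu that] by (intro mult_mono) auto
    finally show ?thesis by simp
  qed
  have Blt: "norm (B y) < 1" if "norm y < 1" for y
  proof -
    have "norm (B y) = norm (blaschke_factor w y) * norm (blaschke_factor u y)" unfolding B_def by (simp add: norm_mult)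
    also have "\<dots> \<le> norm (blaschke_factor w y) * 1"
      using bf_lt1[OF nu that] by (intro mult_left_mono) auto
    also have "\<dots> < 1" using bf_lt1[OF nw that] by simp
    finally show ?thesis .
  qed
  have na: "norm a < 1" unfolding a_def using Blt[OF nc] .
  have Qc: "(1 - cnj w*c)*(1 - cnj u*c) \<noteq> 0" using Qnz[of c] nc unfolding Q_def by simp
  have h1: "a * ((1 - cnj w*c)*(1 - cnj u*c)) = (c - w)*(c - u)"
    using Bf[of c] Qc unfolding a_def P_def Q_def by (simp add: field_simps)
  have h2: "(2*c - w - u) * ((1 - cnj w * c) * (1 - cnj u * c)) - (c - w) * (c - u) * (2 * cnj w * cnj u * c - cnj w - cnj u) = 0"
    using B_crit[OF nw nu nc] \<open>deriv B c = 0\<close> unfolding B_def by simp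
  note rels = alg_rel[OF h1 h2 Qc]
  have rel1c: "cnj w * cnj u - cnj a = (1 - cnj a * w * u) * (cnj c)^2"
    using arg_cong[where f=cnj, OF rels(1)] by simp
  have rel2c: "-(cnj w + cnj u) + cnj a * (w + u) = -2*(1 - cnj a * w * u) * cnj c"
    using arg_cong[where f=cnj, OF rels(2)] by simp
  define L where "L = 1 - a * cnj w * cnj u"
  define L' where "L' = 1 - cnj a * w * u"
  have F1: "P y - a * Q y = L * (y - c)^2" for y
    unfolding P_def Q_def L_def using alg_F[OF rels] .
  have F2: "Q y - cnj a * P y = L' * (1 - cnj c * y)^2" for y
    unfolding P_def Q_def L'_def using alg_F2[OF rel1c rel2c] .
  have h2c: "(2 * cnj c - cnj w - cnj u) * ((1 - w * cnj c) * (1 - u * cnj c)) - (cnj c - cnj w) * (cnj c - cnj u) * (2 * w * u * cnj c - w - u) = 0"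
    using arg_cong[where f=cnj, OF h2] by simp
  have cC: "c * cnj c \<noteq> 1"
  proof
    assume "c * cnj c = 1"
    then have "norm (c * cnj c) = 1" by simp
    then have "norm c * norm c = 1" by (simp add: norm_mult)
    moreover have "norm c * norm c \<le> norm c * 1" using nc by (intro mult_left_mono) auto
    ultimately show False using nc by simp
  qed
  have real: "(1 - cnj w*c)*(1 - cnj u*c) - cnj w*cnj u*((c - w)*(c - u)) = (1 - w*cnj c)*(1 - u*cnj c) - w*u*((cnj c - cnj w)*(cnj c - cnj u))"
    by (rule alg_real[OF h2 h2c cC])
  define x1 where "x1 = 1 - cnj c * w"
  define x2 where "x2 = 1 - cnj c * u"
  define x3 where "x3 = 1 - c * cnj a"
  define x3' where "x3' = 1 - cnj c * a"
  have x1nz: "x1 \<noteq> 0" unfolding x1_def using bf_denom_nz[OF nc] nw by simp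
  have x2nz: "x2 \<noteq> 0" unfolding x2_def using bf_denom_nz[OF nc] nu by simp
  have x3'nz: "x3' \<noteq> 0" unfolding x3'_def using bf_denom_nz[OF nc] na by simp
  have cx3: "cnj x3 = x3'" unfolding x3_def x3'_def by simp
  have x3nz: "x3 \<noteq> 0" using x3'nz cx3 by auto
  have cx1: "cnj x1 = 1 - c * cnj w" unfolding x1_def by simp
  have cx2: "cnj x2 = 1 - c * cnj u" unfolding x2_def by simp
  have h1c: "cnj a * ((1 - w * cnj c)*(1 - u * cnj c)) = (cnj c - cnj w)*(cnj c - cnj u)"
    using arg_cong[where f=cnj, OF h1] by simp
  have s1: "L * ((1 - c * cnj w) * (1 - c * cnj u)) = (1 - cnj w*c)*(1 - cnj u*c) - cnj w*cnj u*((c - w)*(c - u))"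
  proof -
    have "L * ((1 - c * cnj w) * (1 - c * cnj u)) = (1 - cnj w*c)*(1 - cnj u*c) - cnj w*cnj u*(a * ((1 - cnj w*c)*(1 - cnj u*c)))"
      unfolding L_def by (simp add: algebra_simps)
    then show ?thesis unfolding h1 .
  qed
  have s2: "L' * ((1 - cnj c * w) * (1 - cnj c * u)) = (1 - w*cnj c)*(1 - u*cnj c) - w*u*((cnj c - cnj w)*(cnj c - cnj u))"
  proof -
    have "L' * ((1 - cnj c * w) * (1 - cnj c * u)) = (1 - w*cnj c)*(1 - u*cnj c) - w*u*(cnj a * ((1 - w * cnj c)*(1 - u * cnj c)))"
      unfolding L'_def by (simp add: algebra_simps)
    then show ?thesis unfolding h1c .
  qed
  have LL: "L * (cnj x1 * cnj x2) = L' * (x1 * x2)"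
  proof -
    have "L * (cnj x1 * cnj x2) = L * ((1 - c * cnj w) * (1 - c * cnj u))" using cx1 cx2 by simp
    also have "\<dots> = (1 - w*cnj c)*(1 - u*cnj c) - w*u*((cnj c - cnj w)*(cnj c - cnj u))" unfolding s1 by (rule real)
    also have "\<dots> = L' * ((1 - cnj c * w) * (1 - cnj c * u))" using s2 by simp
    also have "\<dots> = L' * (x1 * x2)" unfolding x1_def x2_def ..
    finally show ?thesis .
  qed
  have L'nz: "L' \<noteq> 0"
  proof -
    have "norm (cnj a * w * u) < 1"
    proof -
      have "norm (cnj a * w * u) = norm a * norm w * norm u" by (simp add: norm_mult)
      also have "\<dots> \<le> norm a"
      proof -
        have "norm w * norm u \<le> 1" using nw nu by (intro mult_le_one) auto
        then have "norm a * (norm w * norm u) \<le> norm a * 1" by (intro mult_left_mono) auto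
        then show ?thesis by (simp add: mult.assoc)
      qed
      finally show ?thesis using na by simp
    qed
    then show ?thesis unfolding L'_def by auto
  qed
  define \<kappa> where "\<kappa> = (x1 / cnj x1) * (x2 / cnj x2) * (x3 / cnj x3)"
  have nk: "norm \<kappa> = 1"
  proof -
    have "norm \<kappa> = norm (x1 / cnj x1) * norm (x2 / cnj x2) * norm (x3 / cnj x3)" unfolding \<kappa>_def by (simp only: norm_mult)
    then show ?thesis using unit_frac[OF x1nz] unit_frac[OF x2nz] unit_frac[OF x3nz] by simp
  qed
  have kk: "\<kappa> * cnj \<kappa> = 1" using complex_norm_square[of \<kappa>] nk by simp
  define \<omega> where "\<omega> = L / L'"
  have hk: "\<kappa> * x3' = \<omega> * x3"
  proof -
    have "\<omega> = (x1 * x2) / (cnj x1 * cnj x2)" unfolding \<omega>_def using LL L'nz x1nz x2nz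
      by (simp add: field_simps)
    then show ?thesis unfolding \<kappa>_def cx3[symmetric] using x1nz x2nz x3nz by (simp add: field_simps)
  qed
  have lam_eq: "lam = - \<kappa> * ((a - c) / x3')"
  proof -
    have e: "\<i> * (of_real pi + 2 * of_real (Arg x1) + 2 * of_real (Arg x2) + 2 * of_real (Arg x3))
        = \<i> * of_real pi + \<i> * (2 * of_real (Arg x1)) + \<i> * (2 * of_real (Arg x2)) + \<i> * (2 * of_real (Arg x3))"
      by (simp add: algebra_simps)
    have "exp (\<i> * (of_real pi + 2 * of_real (Arg x1) + 2 * of_real (Arg x2) + 2 * of_real (Arg x3)))
        = - ((x1 / cnj x1) * (x2 / cnj x2) * (x3 / cnj x3))"
      unfolding e exp_add exp_2arg[OF x1nz] exp_2arg[OF x2nz] exp_2arg[OF x3nz] by simp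
    then show ?thesis unfolding lam_def \<kappa>_def a_def[symmetric] x1_def[symmetric] x2_def[symmetric]
        x3_def[symmetric] x3'_def[symmetric] by simp
  qed
  have nlam: "norm lam < 1"
  proof -
    have "norm lam = norm \<kappa> * norm ((a - c) / x3')" unfolding lam_eq by (simp add: norm_mult norm_divide)
    also have "\<dots> = norm (blaschke_factor c a)" unfolding blaschke_factor_def x3'_def using nk by simp
    finally have "norm lam = norm (blaschke_factor c a)" .
    then show ?thesis using bf_lt1[OF nc na] by simp
  qed
  have hl: "lam * x3' = - \<kappa> * (a - c)" unfolding lam_eq using x3'nz by simp
  have hl': "cnj lam * x3 = - cnj \<kappa> * (cnj a - cnj c)"
  proof -
    have cx3': "cnj x3' = x3" using cx3 by (metis complex_cnj_cnj)
    show ?thesis using arg_cong[where f=cnj, OF hl] unfolding complex_cnj_mult cx3' by simp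
  qed
  define cc where "cc y = Q y * (1 - cnj c * y) * (1 - cnj a * B y) * (1 - cnj c * B y)
      * (1 - cnj lam * (\<kappa> * blaschke_factor c y)^2)" for y
  have Bcont: "isCont B z" if "norm z \<le> 1" for z
  proof -
    have "isCont (blaschke_factor w) z" by (rule bf_cont, rule bf_denom_nz[OF nw that])
    moreover have "isCont (blaschke_factor u) z" by (rule bf_cont, rule bf_denom_nz[OF nu that])
    ultimately show ?thesis unfolding B_def by (intro continuous_intros)
  qed
  have ccz: "isCont cc z \<and> cc z \<noteq> 0" if z: "norm z \<le> 1" for z
  proof
    have "isCont (blaschke_factor c) z" by (rule bf_cont, rule bf_denom_nz[OF nc z])
    moreover have "isCont Q z" unfolding Q_def by (intro continuous_intros)
    ultimately show "isCont cc z" unfolding cc_def using Bcont[OF z] by (intro continuous_intros)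
    have f4: "norm ((\<kappa> * blaschke_factor c z)^2) \<le> 1"
      using bf_le1[OF nc z] nk by (simp add: norm_mult norm_power power_le_one)
    show "cc z \<noteq> 0" unfolding cc_def using Qnz[OF z] bf_denom_nz[OF nc z] bf_denom_nz[OF na Ble[OF z]]
      bf_denom_nz[OF nc Ble[OF z]] bf_denom_nz[OF nlam f4] by simp
  qed
  have Geq: "B y = blaschke_factor (-c) (cnj \<kappa> * Hm lam (\<kappa> * blaschke_factor c y))" if ccy: "cc y \<noteq> 0" for y
  proof -
    have d1: "Q y \<noteq> 0" and d2: "1 - cnj c * y \<noteq> 0" and d3: "1 - cnj a * B y \<noteq> 0"
      and d4: "1 - cnj c * B y \<noteq> 0" and d5: "1 - cnj lam * (\<kappa> * blaschke_factor c y)^2 \<noteq> 0"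
      using ccy unfolding cc_def by auto
    define X where "X = B y"
    define Y where "Y = (blaschke_factor c y)^2"
    have hE: "X - a = \<omega> * Y * (1 - cnj a * X)"
    proof -
      have e1: "(X - a) * Q y = L * (y - c)^2" unfolding X_def Bf using F1[of y] d1 by (simp add: field_simps)
      have e2: "(1 - cnj a * X) * Q y = L' * (1 - cnj c * y)^2" unfolding X_def Bf using F2[of y] d1 by (simp add: field_simps)
      have e3: "Y * (1 - cnj c * y)^2 = (y - c)^2" unfolding Y_def blaschke_factor_def using d2 by (simp add: power_divide)
      have "Q y * (L' * (X - a) - L * Y * (1 - cnj a * X)) = 0" using e1 e2 e3 by algebra
      then have "L' * (X - a) = L * Y * (1 - cnj a * X)" using d1 by simp
      then show ?thesis unfolding \<omega>_def using L'nz by (simp add: field_simps)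
    qed
    have cross: "\<kappa> * (X - c) * (1 - cnj lam * \<kappa>^2 * Y) = (\<kappa>^2 * Y - lam) * (1 - cnj c * X)"
      by (rule alg_final[OF hE hk x3_def x3'_def kk hl hl', of "1/x3" "1/x3'"]) (use x3nz x3'nz in auto)
    have d5': "1 - cnj lam * \<kappa>^2 * Y \<noteq> 0" using d5 unfolding Y_def by (simp add: power_mult_distrib mult.assoc)
    have d4': "1 - cnj c * X \<noteq> 0" using d4 unfolding X_def .
    have "\<kappa> * blaschke_factor c X = Hm lam (\<kappa> * blaschke_factor c y)"
    proof -
      have "\<kappa> * blaschke_factor c X = \<kappa> * (X - c) / (1 - cnj c * X)" unfolding blaschke_factor_def by simp
      also have "\<dots> = (\<kappa>^2 * Y - lam) / (1 - cnj lam * \<kappa>^2 * Y)"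
        using cross d4' d5' by (simp add: field_simps)
      also have "\<dots> = Hm lam (\<kappa> * blaschke_factor c y)"
      proof -
        have "(\<kappa> * blaschke_factor c y)^2 = \<kappa>^2 * Y" unfolding Y_def by (simp add: power_mult_distrib)
        then show ?thesis unfolding Hm_def by (simp add: blaschke_factor_def mult.assoc)
      qed
      finally show ?thesis .
    qed
    then have "cnj \<kappa> * Hm lam (\<kappa> * blaschke_factor c y) = blaschke_factor c X"
    proof -
      have "cnj \<kappa> * (\<kappa> * blaschke_factor c X) = (\<kappa> * cnj \<kappa>) * blaschke_factor c X" by (simp add: algebra_simps)
      then show ?thesis using \<open>\<kappa> * blaschke_factor c X = Hm lam (\<kappa> * blaschke_factor c y)\<close> kk by simp
    qed
    then show ?thesis using bf_inv[OF nc d4'] unfolding X_def by simp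
  qed
  have T: "(elliptic (Hm lam) \<longrightarrow> elliptic B) \<and> (parabolic (Hm lam) \<longrightarrow> parabolic B) \<and> (hyperbolic (Hm lam) \<longrightarrow> hyperbolic B)"
    by (rule transfer_mob[OF nc nk nlam ccz Geq])
  note Cl = classify[OF nlam]
  have fr: "frontier E2 = closure E2 - E2" unfolding frontier_def interior_open[OF E2_open] ..
  have e1: "lam \<in> E2 \<longleftrightarrow> dsc lam > 0" unfolding E2_eq using nlam by simp
  have cl: "lam \<in> closure E2 \<longleftrightarrow> dsc lam \<ge> 0"
  proof
    assume "lam \<in> closure E2" then show "dsc lam \<ge> 0" using closure_E2_sub by auto
  next
    assume "dsc lam \<ge> 0"
    then have "dsc lam > 0 \<or> dsc lam = 0" by linarith
    then show "lam \<in> closure E2"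
    proof
      assume "dsc lam > 0" then show ?thesis using e1 closure_subset by blast
    next
      assume "dsc lam = 0" then show ?thesis using dsc0_in_closure[OF nlam] by simp
    qed
  qed
  have e2: "lam \<in> frontier E2 \<inter> ball 0 1 \<longleftrightarrow> dsc lam = 0" unfolding fr using e1 cl nlam by auto
  have e3: "lam \<in> ball 0 1 - closure E2 \<longleftrightarrow> dsc lam < 0" using cl nlam by auto
  consider "dsc lam > 0" | "dsc lam = 0" | "dsc lam < 0" by linarith
  then show ?thesis
  proof cases
    case 1
    then have "elliptic B" using Cl T by blast
    then show ?thesis using e1 e2 e3 1 ell_not_par ell_not_hyp by auto
  next
    case 2
    then have "parabolic B" using Cl T by blast
    then show ?thesis using e1 e2 e3 2 ell_not_par par_not_hyp by auto
  next
    case 3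
    then have "hyperbolic B" using Cl T by blast
    then show ?thesis using e1 e2 e3 3 ell_not_hyp par_not_hyp by auto
  qed
qed

end
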